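(* The matroid $V_{10}$ has the half-plane property; that is, $f_{10}$ is stable.
   Context: $V_{10}$ is the matroid on $\{1,\dots,10\}$ whose bases are all $4$-element subsets of $\{1,\dots,10\}$ except $\{1,2,3,4\},\{1,2,5,6\},\{1,2,7,8\},\{1,2,9,10\},\{3,4,5,6\},\{5,6,7,8\},\{7,8,9,10\}$, and $f_{10}=\sum_{B}\prod_{i\in B}x_i\in\mathbb{R}[x_1,\dots,x_{10}]$ (sum over bases $B$ of $V_{10}$) is its basis generating polynomial. A homogeneous real polynomial $f$ is stable if for all $v\in(\mathbb{R}_{>0})^{10}$ and $w\in\mathbb{R}^{10}$, $f(tv+w)\in\mathbb{R}[t]$ has only real roots; a matroid has the half-plane property if its basis generating polynomial is stable. *)

theory Defs
  imports Complex_Main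
begin

definition V10_bases :: "nat set set" where
  "V10_bases = {B. B \<subseteq> {1..10} \<and> card B = 4} -
     {{1,2,3,4}, {1,2,5,6}, {1,2,7,8}, {1,2,9,10}, {3,4,5,6}, {5,6,7,8}, {7,8,9,10}}"

text \<open>Basis generating polynomial of a set of bases, as a polynomial function
  (evaluated at complex points, so that complex roots can be discussed).\<close>
definition basis_gen_poly :: "nat set set \<Rightarrow> (nat \<Rightarrow> complex) \<Rightarrow> complex" where
  "basis_gen_poly \<B> x = (\<Sum>B\<in>\<B>. \<Prod>i\<in>B. x i)"

definition f10 :: "(nat \<Rightarrow> complex) \<Rightarrow> complex" where
  "f10 = basis_gen_poly V10_bases"

definition stable :: "nat \<Rightarrow> ((nat \<Rightarrow> complex) \<Rightarrow> complex) \<Rightarrow> bool" where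
  "stable n f \<longleftrightarrow>
     (\<forall>v w :: nat \<Rightarrow> real. (\<forall>i\<in>{1..n}. v i > 0) \<longrightarrow>
        (\<forall>t :: complex. f (\<lambda>i. t * complex_of_real (v i) + complex_of_real (w i)) = 0
            \<longrightarrow> t \<in> \<real>))"

definition half_plane_property :: "nat \<Rightarrow> nat set set \<Rightarrow> bool" where
  "half_plane_property n \<B> \<longleftrightarrow> stable n (basis_gen_poly \<B>)"

end

theory Submission
  imports Defs
begin

section \<open>Grace-Walsh-Szego for a pair of variables\<close>

lemma gws2:
  fixes a b c x y :: complex
  assumes hx: "Im x > 0" and hy: "Im y > 0" and F: "a + b*(x+y) + c*(x*y) = 0"
  shows "\<exists>z. Im z > 0 \<and> a + b*(2*z) + c*(z*z) = 0"
proof (cases "c = 0")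
  case True
  have e: "2*((x+y)/2) = x + y" by simp
  have "a + b*(2*((x+y)/2)) + c*(((x+y)/2)*((x+y)/2)) = 0" using F True by (simp only: e) simp
  moreover have "Im ((x+y)/2) > 0" using hx hy by simp
  ultimately show ?thesis by blast
next
  case False
  define l where "l = b/c"
  define p where "p = (l + x)*(l + y)"
  define w where "w = csqrt p"
  have w2: "w*w = p" using power2_csqrt[of p] by (simp add: w_def power2_eq_square)
  have key: "a + b*(2*z) + c*(z*z) = 0" if hz: "(z + l)*(z + l) = p" for z
  proof -
    have "a + b*(2*z) + c*(z*z) = c*((z+l)*(z+l) - l*l) + a" using False
      by (simp add: l_def field_simps)
    also have "\<dots> = c*(p - l*l) + a" using hz by simp
    also have "\<dots> = c*(l*(x+y) + x*y) + a" by (simp add: p_def algebra_simps)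
    also have "\<dots> = a + b*(x+y) + c*(x*y)" using False by (simp add: l_def field_simps)
    finally show ?thesis using F by simp
  qed
  have imw: "\<bar>Im w\<bar> > Im l"
  proof (cases "Im l < 0")
    case True then show ?thesis by linarith
  next
    case False
    define U where "U = l + x"
    define V where "V = l + y"
    have IU: "Im U > Im l" using hx by (simp add: U_def)
    have IV: "Im V > Im l" using hy by (simp add: V_def)
    have pUV: "p = U*V" by (simp add: p_def U_def V_def)
    have cs: "cmod U * cmod V \<ge> \<bar>Re U * Re V\<bar> + Im U * Im V"
    proof (rule power2_le_imp_le)
      have "(\<bar>Re U * Re V\<bar> + Im U * Im V)^2 \<le> ((Re U)^2 + (Im U)^2) * ((Re V)^2 + (Im V)^2)"
      proof -
        have "0 \<le> (\<bar>Re U\<bar> * Im V - Im U * \<bar>Re V\<bar>)^2" by simp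
        then show ?thesis by (simp add: power2_eq_square abs_mult algebra_simps)
      qed
      also have "\<dots> = (cmod U * cmod V)^2" by (simp add: power_mult_distrib cmod_power2)
      finally show "(\<bar>Re U * Re V\<bar> + Im U * Im V)^2 \<le> (cmod U * cmod V)^2" .
      show "0 \<le> cmod U * cmod V" by simp
    qed
    have Rep: "Re p = Re U * Re V - Im U * Im V" by (simp add: pUV)
    have cp: "cmod p = cmod U * cmod V" by (simp add: pUV norm_mult)
    have lpos: "Im l \<ge> 0" using False by simp
    have prod: "Im U * Im V > Im l * Im l"
      using IU IV lpos by (meson le_less_trans mult_strict_mono')
    have "cmod p - Re p \<ge> 2 * (Im U * Im V)" using cs Rep cp by linarith
    then have gt: "cmod p - Re p > 2 * (Im l)^2" using prod by (simp add: power2_eq_square)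
    have "Re p = (Re w)^2 - (Im w)^2" using w2 by (auto simp: power2_eq_square)
    moreover have "cmod p = (Re w)^2 + (Im w)^2"
      using w2 by (metis cmod_power2 norm_mult power2_eq_square)
    ultimately have "(Im w)^2 > (Im l)^2" using gt by linarith
    then have "\<bar>Im w\<bar>^2 > (Im l)^2" by simp
    then show ?thesis using lpos by (meson abs_ge_zero power_less_imp_less_base)
  qed
  show ?thesis
  proof (cases "Im w > Im l")
    case True
    have "((w - l) + l)*((w - l) + l) = p" using w2 by simp
    then have "a + b*(2*(w-l)) + c*((w-l)*(w-l)) = 0" by (rule key)
    moreover have "Im (w - l) > 0" using True by simp
    ultimately show ?thesis by blast
  next
    case False
    then have "- Im w > Im l" using imw by linarith
    have "((-w - l) + l)*((-w - l) + l) = p" using w2 by simp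
    then have "a + b*(2*(-w-l)) + c*((-w-l)*(-w-l)) = 0" by (rule key)
    moreover have "Im (-w - l) > 0" using \<open>- Im w > Im l\<close> by simp
    ultimately show ?thesis by blast
  qed
qed

lemma gwsF:
  fixes F :: "complex \<Rightarrow> complex \<Rightarrow> complex"
  assumes aff: "\<And>s q. F s q = F 0 0 + s*(F 1 0 - F 0 0) + q*(F 0 1 - F 0 0)"
    and hx: "Im x > 0" and hy: "Im y > 0" and F0: "F (x+y) (x*y) = 0"
  shows "\<exists>z. Im z > 0 \<and> F (2*z) (z*z) = 0"
proof -
  have "F 0 0 + (F 1 0 - F 0 0)*(x+y) + (F 0 1 - F 0 0)*(x*y) = 0"
    using F0 aff[of "x+y" "x*y"] by (simp add: mult.commute)
  then obtain z where "Im z > 0" "F 0 0 + (F 1 0 - F 0 0)*(2*z) + (F 0 1 - F 0 0)*(z*z) = 0"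
    using gws2[OF hx hy] by blast
  then show ?thesis using aff[of "2*z" "z*z"] by (metis mult.commute)
qed


section \<open>The basis generating polynomial in explicit form\<close>

definition esum :: "nat set \<Rightarrow> nat \<Rightarrow> (nat \<Rightarrow> complex) \<Rightarrow> complex" where
  "esum S k x = (\<Sum>B\<in>{B. B \<subseteq> S \<and> card B = k}. \<Prod>i\<in>B. x i)"

lemma esum_0: "finite S \<Longrightarrow> esum S 0 x = 1"
proof -
  assume fin: "finite S"
  have "B \<subseteq> S \<and> card B = 0 \<longleftrightarrow> B = {}" for B
    using fin by (metis card.empty card_0_eq empty_subsetI finite_subset)
  then have "{B. B \<subseteq> S \<and> card B = 0} = {{}}" by auto
  then show ?thesis by (simp add: esum_def)
qed

lemma esum_empty: "esum {} (Suc k) x = 0"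
  by (simp add: esum_def)

lemma esum_insert:
  assumes fin: "finite S" and a: "a \<notin> S"
  shows "esum (insert a S) (Suc k) x = esum S (Suc k) x + x a * esum S k x"
proof -
  let ?A = "{B. B \<subseteq> S \<and> card B = Suc k}"
  let ?C = "{B. B \<subseteq> S \<and> card B = k}"
  have split: "{B. B \<subseteq> insert a S \<and> card B = Suc k} = ?A \<union> insert a ` ?C"
  proof (rule set_eqI, rule iffI)
    fix B assume "B \<in> {B. B \<subseteq> insert a S \<and> card B = Suc k}"
    then have B: "B \<subseteq> insert a S" "card B = Suc k" by auto
    show "B \<in> ?A \<union> insert a ` ?C"
    proof (cases "a \<in> B")
      case True
      have "B - {a} \<subseteq> S" using B by auto
      moreover have "card (B - {a}) = k" using B True by (simp add: card_Diff_singleton)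
      moreover have "B = insert a (B - {a})" using True by auto
      ultimately show ?thesis by blast
    next
      case False
      then have "B \<subseteq> S" using B by auto
      then show ?thesis using B by auto
    qed
  next
    fix B assume "B \<in> ?A \<union> insert a ` ?C"
    then show "B \<in> {B. B \<subseteq> insert a S \<and> card B = Suc k}"
    proof
      assume "B \<in> ?A" then show ?thesis by auto
    next
      assume "B \<in> insert a ` ?C"
      then obtain C where C: "C \<subseteq> S" "card C = k" "B = insert a C" by auto
      have "finite C" using C fin finite_subset by auto
      moreover have "a \<notin> C" using C a by auto
      ultimately show ?thesis using C by auto
    qed
  qed
  have finA: "finite ?A" using fin by simp
  have finC: "finite (insert a ` ?C)" using fin by simp
  have disj: "?A \<inter> insert a ` ?C = {}" using a by auto
  have inj: "inj_on (insert a) ?C" using a by (auto simp: inj_on_def)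
  have "esum (insert a S) (Suc k) x = (\<Sum>B\<in>?A. \<Prod>i\<in>B. x i) + (\<Sum>B\<in>insert a ` ?C. \<Prod>i\<in>B. x i)"
    unfolding esum_def split using finA finC disj by (rule sum.union_disjoint)
  also have "(\<Sum>B\<in>insert a ` ?C. \<Prod>i\<in>B. x i) = (\<Sum>C\<in>?C. \<Prod>i\<in>insert a C. x i)"
    using inj by (simp add: sum.reindex)
  also have "\<dots> = (\<Sum>C\<in>?C. x a * (\<Prod>i\<in>C. x i))"
  proof (rule sum.cong)
    fix C assume "C \<in> ?C"
    then have "finite C" "a \<notin> C" using fin a finite_subset by auto
    then show "(\<Prod>i\<in>insert a C. x i) = x a * (\<Prod>i\<in>C. x i)" by simp
  qed simp
  also have "\<dots> = x a * esum S k x" by (simp add: esum_def sum_distrib_left)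
  finally show ?thesis by (simp add: esum_def)
qed

lemma int10: "{1..10::nat} = {1,2,3,4,5,6,7,8,9,10}" by (auto; presburger)

lemma setneq_sq: "(\<Sum>i\<in>A. i^2) \<noteq> (\<Sum>i\<in>B. (i::nat)^2) \<Longrightarrow> (A = B) = False"
  by auto

lemma sN: "(\<Sum>B\<in>{{1,2,3,4},{1,2,5,6},{1,2,7,8},{1,2,9,10},{3,4,5,6},{5,6,7,8},{7,8,9,10::nat}}. \<Prod>i\<in>B. x i)
   = x 1 * x 2 * x 3 * x 4 + x 1 * x 2 * x 5 * x 6 + x 1 * x 2 * x 7 * x 8 + x 1 * x 2 * x 9 * x 10 + x 3 * x 4 * x 5 * x 6 + x 5 * x 6 * x 7 * x 8 + x 7 * x 8 * x 9 * x 10"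
  by (simp add: setneq_sq mult.assoc add.assoc)

lemma sub7: "{{1,2,3,4},{1,2,5,6},{1,2,7,8},{1,2,9,10},{3,4,5,6},{5,6,7,8},{7,8,9,10::nat}} \<subseteq> {B. B \<subseteq> {1..10} \<and> card B = 4}"
  by auto

definition Fs :: "complex \<Rightarrow> complex \<Rightarrow> complex \<Rightarrow> complex \<Rightarrow> complex \<Rightarrow> complex \<Rightarrow> complex \<Rightarrow> complex \<Rightarrow> complex \<Rightarrow> complex \<Rightarrow> complex" where
  "Fs s1 s2 s3 s4 s5 q1 q2 q3 q4 q5 = q2*q4 + q2*q5 + q3*q5
     + q1*(s2*s3 + s2*s4 + s2*s5 + s3*s4 + s3*s5 + s4*s5)
     + q2*(s1*s3 + s1*s4 + s1*s5 + s3*s4 + s3*s5 + s4*s5)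
     + q3*(s1*s2 + s1*s4 + s1*s5 + s2*s4 + s2*s5 + s4*s5)
     + q4*(s1*s2 + s1*s3 + s1*s5 + s2*s3 + s2*s5 + s3*s5)
     + q5*(s1*s2 + s1*s3 + s1*s4 + s2*s3 + s2*s4 + s3*s4)
     + (s1*s2*s3*s4 + s1*s2*s3*s5 + s1*s2*s4*s5 + s1*s3*s4*s5 + s2*s3*s4*s5)"

lemma f10_eq:
  "f10 x = Fs (x 1 + x 2) (x 3 + x 4) (x 5 + x 6) (x 7 + x 8) (x 9 + x 10)
              (x 1 * x 2) (x 3 * x 4) (x 5 * x 6) (x 7 * x 8) (x 9 * x 10)"
proof -
  have fin: "finite {B. B \<subseteq> {1..10::nat} \<and> card B = 4}"
    by (rule finite_subset[of _ "Pow {1..10}"]) auto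
  have 1: "f10 x = esum {1..10} 4 x - (\<Sum>B\<in>{{1,2,3,4},{1,2,5,6},{1,2,7,8},{1,2,9,10},{3,4,5,6},{5,6,7,8},{7,8,9,10::nat}}. \<Prod>i\<in>B. x i)"
    unfolding f10_def basis_gen_poly_def V10_bases_def esum_def by (rule sum_diff[OF fin sub7])
  have 2: "esum {1..10} 4 x = esum {1,2,3,4,5,6,7,8,9,10} (Suc (Suc (Suc (Suc 0)))) x"
  proof -
    have four: "(4::nat) = Suc (Suc (Suc (Suc 0)))" by simp
    show ?thesis by (simp only: int10 four)
  qed
  show ?thesis
    unfolding 1 2 sN Fs_def by (simp add: esum_insert esum_0 esum_empty) algebra
qed

lemma f10_cnj: "f10 (\<lambda>i. cnj (x i)) = cnj (f10 x)"
  unfolding f10_def basis_gen_poly_def by simp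

section \<open>The symmetrized polynomial and its certificate\<close>

definition Gp :: "complex \<Rightarrow> complex \<Rightarrow> complex \<Rightarrow> complex \<Rightarrow> complex \<Rightarrow> complex" where
  "Gp z1 z2 z3 z4 z5 = 4*(z1 + z2 + z3 + z4 + z5)*(z1*z2*z3 + z1*z2*z4 + z1*z2*z5 + z1*z3*z4 + z1*z3*z5 + z1*z4*z5 + z2*z3*z4 + z2*z3*z5 + z2*z4*z5 + z3*z4*z5) + (z2*z4)^2 + (z2*z5)^2 + (z3*z5)^2"

definition Hp :: "complex \<Rightarrow> complex \<Rightarrow> complex \<Rightarrow> complex \<Rightarrow> complex \<Rightarrow> complex" where
  "Hp z1 z2 z3 z4 z5 = (z1 + z2 + z3 + z4 + z5)*(z1*z2 + z1*z3 + z1*z4 + z1*z5 + z2*z3 + z2*z4 + z2*z5 + z3*z4 + z3*z5 + z4*z5)"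

lemma Fs_diag: "Fs (2*z1) (2*z2) (2*z3) (2*z4) (2*z5) (z1*z1) (z2*z2) (z3*z3) (z4*z4) (z5*z5) = Gp z1 z2 z3 z4 z5"
  unfolding Fs_def Gp_def by algebra

lemma cnj_self: "cnj a * a = complex_of_real ((cmod a)^2)"
  by (metis complex_norm_square mult.commute)

definition nu0_0 :: "complex \<Rightarrow> complex \<Rightarrow> complex \<Rightarrow> complex \<Rightarrow> complex \<Rightarrow> complex" where
  "nu0_0 z1 z2 z3 z4 z5 = (z1*z2*z5)"

definition nu0_1 :: "complex \<Rightarrow> complex \<Rightarrow> complex \<Rightarrow> complex \<Rightarrow> complex \<Rightarrow> complex" where
  "nu0_1 z1 z2 z3 z4 z5 = (z1*z3*z5)"

definition nu0_2 :: "complex \<Rightarrow> complex \<Rightarrow> complex \<Rightarrow> complex \<Rightarrow> complex \<Rightarrow> complex" where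
  "nu0_2 z1 z2 z3 z4 z5 = (z2*z2*z4)"

definition nu0_3 :: "complex \<Rightarrow> complex \<Rightarrow> complex \<Rightarrow> complex \<Rightarrow> complex \<Rightarrow> complex" where
  "nu0_3 z1 z2 z3 z4 z5 = (z2*z2*z5)"

definition nu0_4 :: "complex \<Rightarrow> complex \<Rightarrow> complex \<Rightarrow> complex \<Rightarrow> complex \<Rightarrow> complex" where
  "nu0_4 z1 z2 z3 z4 z5 = (z1*z2*z3 + z2*z2*z3 + z2*z3*z3)"

definition nu0_5 :: "complex \<Rightarrow> complex \<Rightarrow> complex \<Rightarrow> complex \<Rightarrow> complex \<Rightarrow> complex" where
  "nu0_5 z1 z2 z3 z4 z5 = (z2*z3*z4)"

definition nu0_6 :: "complex \<Rightarrow> complex \<Rightarrow> complex \<Rightarrow> complex \<Rightarrow> complex \<Rightarrow> complex" where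
  "nu0_6 z1 z2 z3 z4 z5 = (z2*z3*z5)"

definition nu0_7 :: "complex \<Rightarrow> complex \<Rightarrow> complex \<Rightarrow> complex \<Rightarrow> complex \<Rightarrow> complex" where
  "nu0_7 z1 z2 z3 z4 z5 = (z2*z4*z4)"

definition nu0_8 :: "complex \<Rightarrow> complex \<Rightarrow> complex \<Rightarrow> complex \<Rightarrow> complex \<Rightarrow> complex" where
  "nu0_8 z1 z2 z3 z4 z5 = (z2*z4*z5)"

definition nu0_9 :: "complex \<Rightarrow> complex \<Rightarrow> complex \<Rightarrow> complex \<Rightarrow> complex \<Rightarrow> complex" where
  "nu0_9 z1 z2 z3 z4 z5 = (z2*z5*z5)"

definition nu0_10 :: "complex \<Rightarrow> complex \<Rightarrow> complex \<Rightarrow> complex \<Rightarrow> complex \<Rightarrow> complex" where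
  "nu0_10 z1 z2 z3 z4 z5 = (z3*z3*z5)"

definition nu0_11 :: "complex \<Rightarrow> complex \<Rightarrow> complex \<Rightarrow> complex \<Rightarrow> complex \<Rightarrow> complex" where
  "nu0_11 z1 z2 z3 z4 z5 = (z1*z3*z4 + z3*z3*z4 + z3*z4*z4)"

definition nu0_12 :: "complex \<Rightarrow> complex \<Rightarrow> complex \<Rightarrow> complex \<Rightarrow> complex \<Rightarrow> complex" where
  "nu0_12 z1 z2 z3 z4 z5 = (z3*z4*z5)"

definition nu0_13 :: "complex \<Rightarrow> complex \<Rightarrow> complex \<Rightarrow> complex \<Rightarrow> complex \<Rightarrow> complex" where
  "nu0_13 z1 z2 z3 z4 z5 = (z3*z5*z5)"

definition nu0_14 :: "complex \<Rightarrow> complex \<Rightarrow> complex \<Rightarrow> complex \<Rightarrow> complex \<Rightarrow> complex" where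
  "nu0_14 z1 z2 z3 z4 z5 = (z1*z4*z5 + z4*z4*z5 + z4*z5*z5)"

definition nu0_15 :: "complex \<Rightarrow> complex \<Rightarrow> complex \<Rightarrow> complex \<Rightarrow> complex \<Rightarrow> complex" where
  "nu0_15 z1 z2 z3 z4 z5 = (z1*z2*z4)"

definition nu1_0 :: "complex \<Rightarrow> complex \<Rightarrow> complex \<Rightarrow> complex \<Rightarrow> complex \<Rightarrow> complex" where
  "nu1_0 z1 z2 z3 z4 z5 = (z1*z2*z4)"

definition nu1_1 :: "complex \<Rightarrow> complex \<Rightarrow> complex \<Rightarrow> complex \<Rightarrow> complex \<Rightarrow> complex" where
  "nu1_1 z1 z2 z3 z4 z5 = (z1*z2*z5)"

definition nu1_2 :: "complex \<Rightarrow> complex \<Rightarrow> complex \<Rightarrow> complex \<Rightarrow> complex \<Rightarrow> complex" where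
  "nu1_2 z1 z2 z3 z4 z5 = (z1*z1*z3 + z1*z2*z3 + z1*z3*z3 + z1*z3*z4)"

definition nu1_3 :: "complex \<Rightarrow> complex \<Rightarrow> complex \<Rightarrow> complex \<Rightarrow> complex \<Rightarrow> complex" where
  "nu1_3 z1 z2 z3 z4 z5 = (z1*z3*z5)"

definition nu1_4 :: "complex \<Rightarrow> complex \<Rightarrow> complex \<Rightarrow> complex \<Rightarrow> complex \<Rightarrow> complex" where
  "nu1_4 z1 z2 z3 z4 z5 = ((-1)*z1*z1*z3 + z1*z1*z4 + (-1)*z1*z2*z3 + (-1)*z1*z3*z3 + z1*z4*z4 + z1*z4*z5)"

definition nu1_5 :: "complex \<Rightarrow> complex \<Rightarrow> complex \<Rightarrow> complex \<Rightarrow> complex \<Rightarrow> complex" where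
  "nu1_5 z1 z2 z3 z4 z5 = (z1*z1*z3 + (-1)*z1*z1*z4 + z1*z1*z5 + z1*z2*z3 + z1*z3*z3 + (-1)*z1*z4*z4 + z1*z5*z5)"

definition nu1_6 :: "complex \<Rightarrow> complex \<Rightarrow> complex \<Rightarrow> complex \<Rightarrow> complex \<Rightarrow> complex" where
  "nu1_6 z1 z2 z3 z4 z5 = (z2*z3*z4)"

definition nu1_7 :: "complex \<Rightarrow> complex \<Rightarrow> complex \<Rightarrow> complex \<Rightarrow> complex \<Rightarrow> complex" where
  "nu1_7 z1 z2 z3 z4 z5 = (z2*z3*z5)"

definition nu1_8 :: "complex \<Rightarrow> complex \<Rightarrow> complex \<Rightarrow> complex \<Rightarrow> complex \<Rightarrow> complex" where
  "nu1_8 z1 z2 z3 z4 z5 = (z2*z4*z4)"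

definition nu1_9 :: "complex \<Rightarrow> complex \<Rightarrow> complex \<Rightarrow> complex \<Rightarrow> complex \<Rightarrow> complex" where
  "nu1_9 z1 z2 z3 z4 z5 = (z2*z4*z5)"

definition nu1_10 :: "complex \<Rightarrow> complex \<Rightarrow> complex \<Rightarrow> complex \<Rightarrow> complex \<Rightarrow> complex" where
  "nu1_10 z1 z2 z3 z4 z5 = (z2*z5*z5)"

definition nu1_11 :: "complex \<Rightarrow> complex \<Rightarrow> complex \<Rightarrow> complex \<Rightarrow> complex \<Rightarrow> complex" where
  "nu1_11 z1 z2 z3 z4 z5 = (z3*z3*z5)"

definition nu1_12 :: "complex \<Rightarrow> complex \<Rightarrow> complex \<Rightarrow> complex \<Rightarrow> complex \<Rightarrow> complex" where
  "nu1_12 z1 z2 z3 z4 z5 = ((-1)*z1*z1*z3 + (-1)*z1*z2*z3 + (-1)*z1*z3*z3 + z3*z3*z4 + z3*z4*z4)"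

definition nu1_13 :: "complex \<Rightarrow> complex \<Rightarrow> complex \<Rightarrow> complex \<Rightarrow> complex \<Rightarrow> complex" where
  "nu1_13 z1 z2 z3 z4 z5 = (z3*z4*z5)"

definition nu1_14 :: "complex \<Rightarrow> complex \<Rightarrow> complex \<Rightarrow> complex \<Rightarrow> complex \<Rightarrow> complex" where
  "nu1_14 z1 z2 z3 z4 z5 = (z3*z5*z5)"

definition nu1_15 :: "complex \<Rightarrow> complex \<Rightarrow> complex \<Rightarrow> complex \<Rightarrow> complex \<Rightarrow> complex" where
  "nu1_15 z1 z2 z3 z4 z5 = (z1*z1*z3 + (-1)*z1*z1*z4 + z1*z2*z3 + z1*z3*z3 + (-1)*z1*z4*z4 + z4*z4*z5 + z4*z5*z5)"

definition nu2_0 :: "complex \<Rightarrow> complex \<Rightarrow> complex \<Rightarrow> complex \<Rightarrow> complex \<Rightarrow> complex" where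
  "nu2_0 z1 z2 z3 z4 z5 = (z1*z1*z2 + z1*z2*z2 + z1*z2*z3)"

definition nu2_1 :: "complex \<Rightarrow> complex \<Rightarrow> complex \<Rightarrow> complex \<Rightarrow> complex \<Rightarrow> complex" where
  "nu2_1 z1 z2 z3 z4 z5 = (z1*z2*z4)"

definition nu2_2 :: "complex \<Rightarrow> complex \<Rightarrow> complex \<Rightarrow> complex \<Rightarrow> complex \<Rightarrow> complex" where
  "nu2_2 z1 z2 z3 z4 z5 = (z1*z2*z5)"

definition nu2_3 :: "complex \<Rightarrow> complex \<Rightarrow> complex \<Rightarrow> complex \<Rightarrow> complex \<Rightarrow> complex" where
  "nu2_3 z1 z2 z3 z4 z5 = (z1*z3*z5)"

definition nu2_4 :: "complex \<Rightarrow> complex \<Rightarrow> complex \<Rightarrow> complex \<Rightarrow> complex \<Rightarrow> complex" where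
  "nu2_4 z1 z2 z3 z4 z5 = (z1*z1*z4 + z1*z3*z4 + z1*z4*z4 + z1*z4*z5)"

definition nu2_5 :: "complex \<Rightarrow> complex \<Rightarrow> complex \<Rightarrow> complex \<Rightarrow> complex \<Rightarrow> complex" where
  "nu2_5 z1 z2 z3 z4 z5 = ((-1)*z1*z1*z4 + z1*z1*z5 + (-1)*z1*z3*z4 + (-1)*z1*z4*z4 + z1*z5*z5)"

definition nu2_6 :: "complex \<Rightarrow> complex \<Rightarrow> complex \<Rightarrow> complex \<Rightarrow> complex \<Rightarrow> complex" where
  "nu2_6 z1 z2 z3 z4 z5 = (z2*z2*z4)"

definition nu2_7 :: "complex \<Rightarrow> complex \<Rightarrow> complex \<Rightarrow> complex \<Rightarrow> complex \<Rightarrow> complex" where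
  "nu2_7 z1 z2 z3 z4 z5 = (z2*z2*z5)"

definition nu2_8 :: "complex \<Rightarrow> complex \<Rightarrow> complex \<Rightarrow> complex \<Rightarrow> complex \<Rightarrow> complex" where
  "nu2_8 z1 z2 z3 z4 z5 = (z2*z3*z4)"

definition nu2_9 :: "complex \<Rightarrow> complex \<Rightarrow> complex \<Rightarrow> complex \<Rightarrow> complex \<Rightarrow> complex" where
  "nu2_9 z1 z2 z3 z4 z5 = (z2*z3*z5)"

definition nu2_10 :: "complex \<Rightarrow> complex \<Rightarrow> complex \<Rightarrow> complex \<Rightarrow> complex \<Rightarrow> complex" where
  "nu2_10 z1 z2 z3 z4 z5 = (z2*z4*z4)"

definition nu2_11 :: "complex \<Rightarrow> complex \<Rightarrow> complex \<Rightarrow> complex \<Rightarrow> complex \<Rightarrow> complex" where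
  "nu2_11 z1 z2 z3 z4 z5 = (z2*z4*z5)"

definition nu2_12 :: "complex \<Rightarrow> complex \<Rightarrow> complex \<Rightarrow> complex \<Rightarrow> complex \<Rightarrow> complex" where
  "nu2_12 z1 z2 z3 z4 z5 = (z2*z5*z5)"

definition nu2_13 :: "complex \<Rightarrow> complex \<Rightarrow> complex \<Rightarrow> complex \<Rightarrow> complex \<Rightarrow> complex" where
  "nu2_13 z1 z2 z3 z4 z5 = (z3*z4*z5)"

definition nu2_14 :: "complex \<Rightarrow> complex \<Rightarrow> complex \<Rightarrow> complex \<Rightarrow> complex \<Rightarrow> complex" where
  "nu2_14 z1 z2 z3 z4 z5 = (z3*z5*z5)"

definition nu2_15 :: "complex \<Rightarrow> complex \<Rightarrow> complex \<Rightarrow> complex \<Rightarrow> complex \<Rightarrow> complex" where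
  "nu2_15 z1 z2 z3 z4 z5 = ((-1)*z1*z1*z4 + (-1)*z1*z3*z4 + (-1)*z1*z4*z4 + z4*z4*z5 + z4*z5*z5)"

definition nu3_0 :: "complex \<Rightarrow> complex \<Rightarrow> complex \<Rightarrow> complex \<Rightarrow> complex \<Rightarrow> complex" where
  "nu3_0 z1 z2 z3 z4 z5 = (z1*z1*z2 + z1*z2*z2 + z1*z2*z3)"

definition nu3_1 :: "complex \<Rightarrow> complex \<Rightarrow> complex \<Rightarrow> complex \<Rightarrow> complex \<Rightarrow> complex" where
  "nu3_1 z1 z2 z3 z4 z5 = (z1*z2*z4)"

definition nu3_2 :: "complex \<Rightarrow> complex \<Rightarrow> complex \<Rightarrow> complex \<Rightarrow> complex \<Rightarrow> complex" where
  "nu3_2 z1 z2 z3 z4 z5 = (z1*z2*z5)"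

definition nu3_3 :: "complex \<Rightarrow> complex \<Rightarrow> complex \<Rightarrow> complex \<Rightarrow> complex \<Rightarrow> complex" where
  "nu3_3 z1 z2 z3 z4 z5 = ((-1)*z1*z1*z2 + z1*z1*z3 + (-1)*z1*z2*z2 + z1*z3*z3 + z1*z3*z4)"

definition nu3_4 :: "complex \<Rightarrow> complex \<Rightarrow> complex \<Rightarrow> complex \<Rightarrow> complex \<Rightarrow> complex" where
  "nu3_4 z1 z2 z3 z4 z5 = (z1*z3*z5)"

definition nu3_5 :: "complex \<Rightarrow> complex \<Rightarrow> complex \<Rightarrow> complex \<Rightarrow> complex \<Rightarrow> complex" where
  "nu3_5 z1 z2 z3 z4 z5 = (z1*z1*z5 + z1*z4*z5 + z1*z5*z5)"

definition nu3_6 :: "complex \<Rightarrow> complex \<Rightarrow> complex \<Rightarrow> complex \<Rightarrow> complex \<Rightarrow> complex" where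
  "nu3_6 z1 z2 z3 z4 z5 = (z2*z2*z4)"

definition nu3_7 :: "complex \<Rightarrow> complex \<Rightarrow> complex \<Rightarrow> complex \<Rightarrow> complex \<Rightarrow> complex" where
  "nu3_7 z1 z2 z3 z4 z5 = (z2*z2*z5)"

definition nu3_8 :: "complex \<Rightarrow> complex \<Rightarrow> complex \<Rightarrow> complex \<Rightarrow> complex \<Rightarrow> complex" where
  "nu3_8 z1 z2 z3 z4 z5 = ((-1)*z1*z1*z2 + (-1)*z1*z2*z2 + z2*z2*z3 + z2*z3*z3)"

definition nu3_9 :: "complex \<Rightarrow> complex \<Rightarrow> complex \<Rightarrow> complex \<Rightarrow> complex \<Rightarrow> complex" where
  "nu3_9 z1 z2 z3 z4 z5 = (z2*z3*z4)"

definition nu3_10 :: "complex \<Rightarrow> complex \<Rightarrow> complex \<Rightarrow> complex \<Rightarrow> complex \<Rightarrow> complex" where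
  "nu3_10 z1 z2 z3 z4 z5 = (z2*z3*z5)"

definition nu3_11 :: "complex \<Rightarrow> complex \<Rightarrow> complex \<Rightarrow> complex \<Rightarrow> complex \<Rightarrow> complex" where
  "nu3_11 z1 z2 z3 z4 z5 = (z2*z4*z5)"

definition nu3_12 :: "complex \<Rightarrow> complex \<Rightarrow> complex \<Rightarrow> complex \<Rightarrow> complex \<Rightarrow> complex" where
  "nu3_12 z1 z2 z3 z4 z5 = (z2*z5*z5)"

definition nu3_13 :: "complex \<Rightarrow> complex \<Rightarrow> complex \<Rightarrow> complex \<Rightarrow> complex \<Rightarrow> complex" where
  "nu3_13 z1 z2 z3 z4 z5 = (z3*z3*z5)"

definition nu3_14 :: "complex \<Rightarrow> complex \<Rightarrow> complex \<Rightarrow> complex \<Rightarrow> complex \<Rightarrow> complex" where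
  "nu3_14 z1 z2 z3 z4 z5 = (z3*z4*z5)"

definition nu3_15 :: "complex \<Rightarrow> complex \<Rightarrow> complex \<Rightarrow> complex \<Rightarrow> complex \<Rightarrow> complex" where
  "nu3_15 z1 z2 z3 z4 z5 = (z3*z5*z5)"

definition nu4_0 :: "complex \<Rightarrow> complex \<Rightarrow> complex \<Rightarrow> complex \<Rightarrow> complex \<Rightarrow> complex" where
  "nu4_0 z1 z2 z3 z4 z5 = (z1*z1*z2 + z1*z2*z2 + z1*z2*z3)"

definition nu4_1 :: "complex \<Rightarrow> complex \<Rightarrow> complex \<Rightarrow> complex \<Rightarrow> complex \<Rightarrow> complex" where
  "nu4_1 z1 z2 z3 z4 z5 = (z1*z2*z4)"

definition nu4_2 :: "complex \<Rightarrow> complex \<Rightarrow> complex \<Rightarrow> complex \<Rightarrow> complex \<Rightarrow> complex" where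
  "nu4_2 z1 z2 z3 z4 z5 = (z1*z2*z5)"

definition nu4_3 :: "complex \<Rightarrow> complex \<Rightarrow> complex \<Rightarrow> complex \<Rightarrow> complex \<Rightarrow> complex" where
  "nu4_3 z1 z2 z3 z4 z5 = ((-1)*z1*z1*z2 + z1*z1*z3 + (-1)*z1*z2*z2 + z1*z3*z3 + z1*z3*z4)"

definition nu4_4 :: "complex \<Rightarrow> complex \<Rightarrow> complex \<Rightarrow> complex \<Rightarrow> complex \<Rightarrow> complex" where
  "nu4_4 z1 z2 z3 z4 z5 = (z1*z3*z5)"

definition nu4_5 :: "complex \<Rightarrow> complex \<Rightarrow> complex \<Rightarrow> complex \<Rightarrow> complex \<Rightarrow> complex" where
  "nu4_5 z1 z2 z3 z4 z5 = (z1*z1*z2 + (-1)*z1*z1*z3 + z1*z1*z4 + z1*z2*z2 + (-1)*z1*z3*z3 + z1*z4*z4 + z1*z4*z5)"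

definition nu4_6 :: "complex \<Rightarrow> complex \<Rightarrow> complex \<Rightarrow> complex \<Rightarrow> complex \<Rightarrow> complex" where
  "nu4_6 z1 z2 z3 z4 z5 = (z2*z2*z4)"

definition nu4_7 :: "complex \<Rightarrow> complex \<Rightarrow> complex \<Rightarrow> complex \<Rightarrow> complex \<Rightarrow> complex" where
  "nu4_7 z1 z2 z3 z4 z5 = (z2*z2*z5)"

definition nu4_8 :: "complex \<Rightarrow> complex \<Rightarrow> complex \<Rightarrow> complex \<Rightarrow> complex \<Rightarrow> complex" where
  "nu4_8 z1 z2 z3 z4 z5 = ((-1)*z1*z1*z2 + (-1)*z1*z2*z2 + z2*z2*z3 + z2*z3*z3)"

definition nu4_9 :: "complex \<Rightarrow> complex \<Rightarrow> complex \<Rightarrow> complex \<Rightarrow> complex \<Rightarrow> complex" where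
  "nu4_9 z1 z2 z3 z4 z5 = (z2*z3*z4)"

definition nu4_10 :: "complex \<Rightarrow> complex \<Rightarrow> complex \<Rightarrow> complex \<Rightarrow> complex \<Rightarrow> complex" where
  "nu4_10 z1 z2 z3 z4 z5 = (z2*z3*z5)"

definition nu4_11 :: "complex \<Rightarrow> complex \<Rightarrow> complex \<Rightarrow> complex \<Rightarrow> complex \<Rightarrow> complex" where
  "nu4_11 z1 z2 z3 z4 z5 = (z2*z4*z4)"

definition nu4_12 :: "complex \<Rightarrow> complex \<Rightarrow> complex \<Rightarrow> complex \<Rightarrow> complex \<Rightarrow> complex" where
  "nu4_12 z1 z2 z3 z4 z5 = (z2*z4*z5)"

definition nu4_13 :: "complex \<Rightarrow> complex \<Rightarrow> complex \<Rightarrow> complex \<Rightarrow> complex \<Rightarrow> complex" where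
  "nu4_13 z1 z2 z3 z4 z5 = (z3*z3*z5)"

definition nu4_14 :: "complex \<Rightarrow> complex \<Rightarrow> complex \<Rightarrow> complex \<Rightarrow> complex \<Rightarrow> complex" where
  "nu4_14 z1 z2 z3 z4 z5 = (z1*z1*z2 + (-1)*z1*z1*z3 + z1*z2*z2 + (-1)*z1*z3*z3 + z3*z3*z4 + z3*z4*z4)"

definition nu4_15 :: "complex \<Rightarrow> complex \<Rightarrow> complex \<Rightarrow> complex \<Rightarrow> complex \<Rightarrow> complex" where
  "nu4_15 z1 z2 z3 z4 z5 = (z3*z4*z5)"

lemmas nu_defs = nu0_0_def nu0_1_def nu0_2_def nu0_3_def nu0_4_def nu0_5_def nu0_6_def nu0_7_def nu0_8_def nu0_9_def nu0_10_def nu0_11_def nu0_12_def nu0_13_def nu0_14_def nu0_15_def nu1_0_def nu1_1_def nu1_2_def nu1_3_def nu1_4_def nu1_5_def nu1_6_def nu1_7_def nu1_8_def nu1_9_def nu1_10_def nu1_11_def nu1_12_def nu1_13_def nu1_14_def nu1_15_def nu2_0_def nu2_1_def nu2_2_def nu2_3_def nu2_4_def nu2_5_def nu2_6_def nu2_7_def nu2_8_def nu2_9_def nu2_10_def nu2_11_def nu2_12_def nu2_13_def nu2_14_def nu2_15_def nu3_0_def nu3_1_def nu3_2_def nu3_3_def nu3_4_def nu3_5_def nu3_6_def nu3_7_def nu3_8_def nu3_9_def nu3_10_def nu3_11_def nu3_12_def nu3_13_def nu3_14_def nu3_15_def nu4_0_def nu4_1_def nu4_2_def nu4_3_def nu4_4_def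 nu4_5_def nu4_6_def nu4_7_def nu4_8_def nu4_9_def nu4_10_def nu4_11_def nu4_12_def nu4_13_def nu4_14_def nu4_15_def

lemma nu0_0_cnj: "nu0_0 (cnj z1) (cnj z2) (cnj z3) (cnj z4) (cnj z5) = cnj (nu0_0 z1 z2 z3 z4 z5)"
  by (simp add: nu0_0_def)

lemma nu0_1_cnj: "nu0_1 (cnj z1) (cnj z2) (cnj z3) (cnj z4) (cnj z5) = cnj (nu0_1 z1 z2 z3 z4 z5)"
  by (simp add: nu0_1_def)

lemma nu0_2_cnj: "nu0_2 (cnj z1) (cnj z2) (cnj z3) (cnj z4) (cnj z5) = cnj (nu0_2 z1 z2 z3 z4 z5)"
  by (simp add: nu0_2_def)

lemma nu0_3_cnj: "nu0_3 (cnj z1) (cnj z2) (cnj z3) (cnj z4) (cnj z5) = cnj (nu0_3 z1 z2 z3 z4 z5)"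
  by (simp add: nu0_3_def)

lemma nu0_4_cnj: "nu0_4 (cnj z1) (cnj z2) (cnj z3) (cnj z4) (cnj z5) = cnj (nu0_4 z1 z2 z3 z4 z5)"
  by (simp add: nu0_4_def)

lemma nu0_5_cnj: "nu0_5 (cnj z1) (cnj z2) (cnj z3) (cnj z4) (cnj z5) = cnj (nu0_5 z1 z2 z3 z4 z5)"
  by (simp add: nu0_5_def)

lemma nu0_6_cnj: "nu0_6 (cnj z1) (cnj z2) (cnj z3) (cnj z4) (cnj z5) = cnj (nu0_6 z1 z2 z3 z4 z5)"
  by (simp add: nu0_6_def)

lemma nu0_7_cnj: "nu0_7 (cnj z1) (cnj z2) (cnj z3) (cnj z4) (cnj z5) = cnj (nu0_7 z1 z2 z3 z4 z5)"
  by (simp add: nu0_7_def)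

lemma nu0_8_cnj: "nu0_8 (cnj z1) (cnj z2) (cnj z3) (cnj z4) (cnj z5) = cnj (nu0_8 z1 z2 z3 z4 z5)"
  by (simp add: nu0_8_def)

lemma nu0_9_cnj: "nu0_9 (cnj z1) (cnj z2) (cnj z3) (cnj z4) (cnj z5) = cnj (nu0_9 z1 z2 z3 z4 z5)"
  by (simp add: nu0_9_def)

lemma nu0_10_cnj: "nu0_10 (cnj z1) (cnj z2) (cnj z3) (cnj z4) (cnj z5) = cnj (nu0_10 z1 z2 z3 z4 z5)"
  by (simp add: nu0_10_def)

lemma nu0_11_cnj: "nu0_11 (cnj z1) (cnj z2) (cnj z3) (cnj z4) (cnj z5) = cnj (nu0_11 z1 z2 z3 z4 z5)"
  by (simp add: nu0_11_def)

lemma nu0_12_cnj: "nu0_12 (cnj z1) (cnj z2) (cnj z3) (cnj z4) (cnj z5) = cnj (nu0_12 z1 z2 z3 z4 z5)"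
  by (simp add: nu0_12_def)

lemma nu0_13_cnj: "nu0_13 (cnj z1) (cnj z2) (cnj z3) (cnj z4) (cnj z5) = cnj (nu0_13 z1 z2 z3 z4 z5)"
  by (simp add: nu0_13_def)

lemma nu0_14_cnj: "nu0_14 (cnj z1) (cnj z2) (cnj z3) (cnj z4) (cnj z5) = cnj (nu0_14 z1 z2 z3 z4 z5)"
  by (simp add: nu0_14_def)

lemma nu0_15_cnj: "nu0_15 (cnj z1) (cnj z2) (cnj z3) (cnj z4) (cnj z5) = cnj (nu0_15 z1 z2 z3 z4 z5)"
  by (simp add: nu0_15_def)

lemma nu1_0_cnj: "nu1_0 (cnj z1) (cnj z2) (cnj z3) (cnj z4) (cnj z5) = cnj (nu1_0 z1 z2 z3 z4 z5)"
  by (simp add: nu1_0_def)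

lemma nu1_1_cnj: "nu1_1 (cnj z1) (cnj z2) (cnj z3) (cnj z4) (cnj z5) = cnj (nu1_1 z1 z2 z3 z4 z5)"
  by (simp add: nu1_1_def)

lemma nu1_2_cnj: "nu1_2 (cnj z1) (cnj z2) (cnj z3) (cnj z4) (cnj z5) = cnj (nu1_2 z1 z2 z3 z4 z5)"
  by (simp add: nu1_2_def)

lemma nu1_3_cnj: "nu1_3 (cnj z1) (cnj z2) (cnj z3) (cnj z4) (cnj z5) = cnj (nu1_3 z1 z2 z3 z4 z5)"
  by (simp add: nu1_3_def)

lemma nu1_4_cnj: "nu1_4 (cnj z1) (cnj z2) (cnj z3) (cnj z4) (cnj z5) = cnj (nu1_4 z1 z2 z3 z4 z5)"
  by (simp add: nu1_4_def)

lemma nu1_5_cnj: "nu1_5 (cnj z1) (cnj z2) (cnj z3) (cnj z4) (cnj z5) = cnj (nu1_5 z1 z2 z3 z4 z5)"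
  by (simp add: nu1_5_def)

lemma nu1_6_cnj: "nu1_6 (cnj z1) (cnj z2) (cnj z3) (cnj z4) (cnj z5) = cnj (nu1_6 z1 z2 z3 z4 z5)"
  by (simp add: nu1_6_def)

lemma nu1_7_cnj: "nu1_7 (cnj z1) (cnj z2) (cnj z3) (cnj z4) (cnj z5) = cnj (nu1_7 z1 z2 z3 z4 z5)"
  by (simp add: nu1_7_def)

lemma nu1_8_cnj: "nu1_8 (cnj z1) (cnj z2) (cnj z3) (cnj z4) (cnj z5) = cnj (nu1_8 z1 z2 z3 z4 z5)"
  by (simp add: nu1_8_def)

lemma nu1_9_cnj: "nu1_9 (cnj z1) (cnj z2) (cnj z3) (cnj z4) (cnj z5) = cnj (nu1_9 z1 z2 z3 z4 z5)"
  by (simp add: nu1_9_def)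

lemma nu1_10_cnj: "nu1_10 (cnj z1) (cnj z2) (cnj z3) (cnj z4) (cnj z5) = cnj (nu1_10 z1 z2 z3 z4 z5)"
  by (simp add: nu1_10_def)

lemma nu1_11_cnj: "nu1_11 (cnj z1) (cnj z2) (cnj z3) (cnj z4) (cnj z5) = cnj (nu1_11 z1 z2 z3 z4 z5)"
  by (simp add: nu1_11_def)

lemma nu1_12_cnj: "nu1_12 (cnj z1) (cnj z2) (cnj z3) (cnj z4) (cnj z5) = cnj (nu1_12 z1 z2 z3 z4 z5)"
  by (simp add: nu1_12_def)

lemma nu1_13_cnj: "nu1_13 (cnj z1) (cnj z2) (cnj z3) (cnj z4) (cnj z5) = cnj (nu1_13 z1 z2 z3 z4 z5)"
  by (simp add: nu1_13_def)

lemma nu1_14_cnj: "nu1_14 (cnj z1) (cnj z2) (cnj z3) (cnj z4) (cnj z5) = cnj (nu1_14 z1 z2 z3 z4 z5)"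
  by (simp add: nu1_14_def)

lemma nu1_15_cnj: "nu1_15 (cnj z1) (cnj z2) (cnj z3) (cnj z4) (cnj z5) = cnj (nu1_15 z1 z2 z3 z4 z5)"
  by (simp add: nu1_15_def)

lemma nu2_0_cnj: "nu2_0 (cnj z1) (cnj z2) (cnj z3) (cnj z4) (cnj z5) = cnj (nu2_0 z1 z2 z3 z4 z5)"
  by (simp add: nu2_0_def)

lemma nu2_1_cnj: "nu2_1 (cnj z1) (cnj z2) (cnj z3) (cnj z4) (cnj z5) = cnj (nu2_1 z1 z2 z3 z4 z5)"
  by (simp add: nu2_1_def)

lemma nu2_2_cnj: "nu2_2 (cnj z1) (cnj z2) (cnj z3) (cnj z4) (cnj z5) = cnj (nu2_2 z1 z2 z3 z4 z5)"
  by (simp add: nu2_2_def)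

lemma nu2_3_cnj: "nu2_3 (cnj z1) (cnj z2) (cnj z3) (cnj z4) (cnj z5) = cnj (nu2_3 z1 z2 z3 z4 z5)"
  by (simp add: nu2_3_def)

lemma nu2_4_cnj: "nu2_4 (cnj z1) (cnj z2) (cnj z3) (cnj z4) (cnj z5) = cnj (nu2_4 z1 z2 z3 z4 z5)"
  by (simp add: nu2_4_def)

lemma nu2_5_cnj: "nu2_5 (cnj z1) (cnj z2) (cnj z3) (cnj z4) (cnj z5) = cnj (nu2_5 z1 z2 z3 z4 z5)"
  by (simp add: nu2_5_def)

lemma nu2_6_cnj: "nu2_6 (cnj z1) (cnj z2) (cnj z3) (cnj z4) (cnj z5) = cnj (nu2_6 z1 z2 z3 z4 z5)"
  by (simp add: nu2_6_def)

lemma nu2_7_cnj: "nu2_7 (cnj z1) (cnj z2) (cnj z3) (cnj z4) (cnj z5) = cnj (nu2_7 z1 z2 z3 z4 z5)"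
  by (simp add: nu2_7_def)

lemma nu2_8_cnj: "nu2_8 (cnj z1) (cnj z2) (cnj z3) (cnj z4) (cnj z5) = cnj (nu2_8 z1 z2 z3 z4 z5)"
  by (simp add: nu2_8_def)

lemma nu2_9_cnj: "nu2_9 (cnj z1) (cnj z2) (cnj z3) (cnj z4) (cnj z5) = cnj (nu2_9 z1 z2 z3 z4 z5)"
  by (simp add: nu2_9_def)

lemma nu2_10_cnj: "nu2_10 (cnj z1) (cnj z2) (cnj z3) (cnj z4) (cnj z5) = cnj (nu2_10 z1 z2 z3 z4 z5)"
  by (simp add: nu2_10_def)

lemma nu2_11_cnj: "nu2_11 (cnj z1) (cnj z2) (cnj z3) (cnj z4) (cnj z5) = cnj (nu2_11 z1 z2 z3 z4 z5)"
  by (simp add: nu2_11_def)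

lemma nu2_12_cnj: "nu2_12 (cnj z1) (cnj z2) (cnj z3) (cnj z4) (cnj z5) = cnj (nu2_12 z1 z2 z3 z4 z5)"
  by (simp add: nu2_12_def)

lemma nu2_13_cnj: "nu2_13 (cnj z1) (cnj z2) (cnj z3) (cnj z4) (cnj z5) = cnj (nu2_13 z1 z2 z3 z4 z5)"
  by (simp add: nu2_13_def)

lemma nu2_14_cnj: "nu2_14 (cnj z1) (cnj z2) (cnj z3) (cnj z4) (cnj z5) = cnj (nu2_14 z1 z2 z3 z4 z5)"
  by (simp add: nu2_14_def)

lemma nu2_15_cnj: "nu2_15 (cnj z1) (cnj z2) (cnj z3) (cnj z4) (cnj z5) = cnj (nu2_15 z1 z2 z3 z4 z5)"
  by (simp add: nu2_15_def)

lemma nu3_0_cnj: "nu3_0 (cnj z1) (cnj z2) (cnj z3) (cnj z4) (cnj z5) = cnj (nu3_0 z1 z2 z3 z4 z5)"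
  by (simp add: nu3_0_def)

lemma nu3_1_cnj: "nu3_1 (cnj z1) (cnj z2) (cnj z3) (cnj z4) (cnj z5) = cnj (nu3_1 z1 z2 z3 z4 z5)"
  by (simp add: nu3_1_def)

lemma nu3_2_cnj: "nu3_2 (cnj z1) (cnj z2) (cnj z3) (cnj z4) (cnj z5) = cnj (nu3_2 z1 z2 z3 z4 z5)"
  by (simp add: nu3_2_def)

lemma nu3_3_cnj: "nu3_3 (cnj z1) (cnj z2) (cnj z3) (cnj z4) (cnj z5) = cnj (nu3_3 z1 z2 z3 z4 z5)"
  by (simp add: nu3_3_def)

lemma nu3_4_cnj: "nu3_4 (cnj z1) (cnj z2) (cnj z3) (cnj z4) (cnj z5) = cnj (nu3_4 z1 z2 z3 z4 z5)"
  by (simp add: nu3_4_def)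

lemma nu3_5_cnj: "nu3_5 (cnj z1) (cnj z2) (cnj z3) (cnj z4) (cnj z5) = cnj (nu3_5 z1 z2 z3 z4 z5)"
  by (simp add: nu3_5_def)

lemma nu3_6_cnj: "nu3_6 (cnj z1) (cnj z2) (cnj z3) (cnj z4) (cnj z5) = cnj (nu3_6 z1 z2 z3 z4 z5)"
  by (simp add: nu3_6_def)

lemma nu3_7_cnj: "nu3_7 (cnj z1) (cnj z2) (cnj z3) (cnj z4) (cnj z5) = cnj (nu3_7 z1 z2 z3 z4 z5)"
  by (simp add: nu3_7_def)

lemma nu3_8_cnj: "nu3_8 (cnj z1) (cnj z2) (cnj z3) (cnj z4) (cnj z5) = cnj (nu3_8 z1 z2 z3 z4 z5)"
  by (simp add: nu3_8_def)

lemma nu3_9_cnj: "nu3_9 (cnj z1) (cnj z2) (cnj z3) (cnj z4) (cnj z5) = cnj (nu3_9 z1 z2 z3 z4 z5)"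
  by (simp add: nu3_9_def)

lemma nu3_10_cnj: "nu3_10 (cnj z1) (cnj z2) (cnj z3) (cnj z4) (cnj z5) = cnj (nu3_10 z1 z2 z3 z4 z5)"
  by (simp add: nu3_10_def)

lemma nu3_11_cnj: "nu3_11 (cnj z1) (cnj z2) (cnj z3) (cnj z4) (cnj z5) = cnj (nu3_11 z1 z2 z3 z4 z5)"
  by (simp add: nu3_11_def)

lemma nu3_12_cnj: "nu3_12 (cnj z1) (cnj z2) (cnj z3) (cnj z4) (cnj z5) = cnj (nu3_12 z1 z2 z3 z4 z5)"
  by (simp add: nu3_12_def)

lemma nu3_13_cnj: "nu3_13 (cnj z1) (cnj z2) (cnj z3) (cnj z4) (cnj z5) = cnj (nu3_13 z1 z2 z3 z4 z5)"
  by (simp add: nu3_13_def)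

lemma nu3_14_cnj: "nu3_14 (cnj z1) (cnj z2) (cnj z3) (cnj z4) (cnj z5) = cnj (nu3_14 z1 z2 z3 z4 z5)"
  by (simp add: nu3_14_def)

lemma nu3_15_cnj: "nu3_15 (cnj z1) (cnj z2) (cnj z3) (cnj z4) (cnj z5) = cnj (nu3_15 z1 z2 z3 z4 z5)"
  by (simp add: nu3_15_def)

lemma nu4_0_cnj: "nu4_0 (cnj z1) (cnj z2) (cnj z3) (cnj z4) (cnj z5) = cnj (nu4_0 z1 z2 z3 z4 z5)"
  by (simp add: nu4_0_def)

lemma nu4_1_cnj: "nu4_1 (cnj z1) (cnj z2) (cnj z3) (cnj z4) (cnj z5) = cnj (nu4_1 z1 z2 z3 z4 z5)"
  by (simp add: nu4_1_def)

lemma nu4_2_cnj: "nu4_2 (cnj z1) (cnj z2) (cnj z3) (cnj z4) (cnj z5) = cnj (nu4_2 z1 z2 z3 z4 z5)"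
  by (simp add: nu4_2_def)

lemma nu4_3_cnj: "nu4_3 (cnj z1) (cnj z2) (cnj z3) (cnj z4) (cnj z5) = cnj (nu4_3 z1 z2 z3 z4 z5)"
  by (simp add: nu4_3_def)

lemma nu4_4_cnj: "nu4_4 (cnj z1) (cnj z2) (cnj z3) (cnj z4) (cnj z5) = cnj (nu4_4 z1 z2 z3 z4 z5)"
  by (simp add: nu4_4_def)

lemma nu4_5_cnj: "nu4_5 (cnj z1) (cnj z2) (cnj z3) (cnj z4) (cnj z5) = cnj (nu4_5 z1 z2 z3 z4 z5)"
  by (simp add: nu4_5_def)

lemma nu4_6_cnj: "nu4_6 (cnj z1) (cnj z2) (cnj z3) (cnj z4) (cnj z5) = cnj (nu4_6 z1 z2 z3 z4 z5)"
  by (simp add: nu4_6_def)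

lemma nu4_7_cnj: "nu4_7 (cnj z1) (cnj z2) (cnj z3) (cnj z4) (cnj z5) = cnj (nu4_7 z1 z2 z3 z4 z5)"
  by (simp add: nu4_7_def)

lemma nu4_8_cnj: "nu4_8 (cnj z1) (cnj z2) (cnj z3) (cnj z4) (cnj z5) = cnj (nu4_8 z1 z2 z3 z4 z5)"
  by (simp add: nu4_8_def)

lemma nu4_9_cnj: "nu4_9 (cnj z1) (cnj z2) (cnj z3) (cnj z4) (cnj z5) = cnj (nu4_9 z1 z2 z3 z4 z5)"
  by (simp add: nu4_9_def)

lemma nu4_10_cnj: "nu4_10 (cnj z1) (cnj z2) (cnj z3) (cnj z4) (cnj z5) = cnj (nu4_10 z1 z2 z3 z4 z5)"
  by (simp add: nu4_10_def)

lemma nu4_11_cnj: "nu4_11 (cnj z1) (cnj z2) (cnj z3) (cnj z4) (cnj z5) = cnj (nu4_11 z1 z2 z3 z4 z5)"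
  by (simp add: nu4_11_def)

lemma nu4_12_cnj: "nu4_12 (cnj z1) (cnj z2) (cnj z3) (cnj z4) (cnj z5) = cnj (nu4_12 z1 z2 z3 z4 z5)"
  by (simp add: nu4_12_def)

lemma nu4_13_cnj: "nu4_13 (cnj z1) (cnj z2) (cnj z3) (cnj z4) (cnj z5) = cnj (nu4_13 z1 z2 z3 z4 z5)"
  by (simp add: nu4_13_def)

lemma nu4_14_cnj: "nu4_14 (cnj z1) (cnj z2) (cnj z3) (cnj z4) (cnj z5) = cnj (nu4_14 z1 z2 z3 z4 z5)"
  by (simp add: nu4_14_def)

lemma nu4_15_cnj: "nu4_15 (cnj z1) (cnj z2) (cnj z3) (cnj z4) (cnj z5) = cnj (nu4_15 z1 z2 z3 z4 z5)"
  by (simp add: nu4_15_def)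

lemmas nu_cnj = nu0_0_cnj nu0_1_cnj nu0_2_cnj nu0_3_cnj nu0_4_cnj nu0_5_cnj nu0_6_cnj nu0_7_cnj nu0_8_cnj nu0_9_cnj nu0_10_cnj nu0_11_cnj nu0_12_cnj nu0_13_cnj nu0_14_cnj nu0_15_cnj nu1_0_cnj nu1_1_cnj nu1_2_cnj nu1_3_cnj nu1_4_cnj nu1_5_cnj nu1_6_cnj nu1_7_cnj nu1_8_cnj nu1_9_cnj nu1_10_cnj nu1_11_cnj nu1_12_cnj nu1_13_cnj nu1_14_cnj nu1_15_cnj nu2_0_cnj nu2_1_cnj nu2_2_cnj nu2_3_cnj nu2_4_cnj nu2_5_cnj nu2_6_cnj nu2_7_cnj nu2_8_cnj nu2_9_cnj nu2_10_cnj nu2_11_cnj nu2_12_cnj nu2_13_cnj nu2_14_cnj nu2_15_cnj nu3_0_cnj nu3_1_cnj nu3_2_cnj nu3_3_cnj nu3_4_cnj nu3_5_cnj nu3_6_cnj nu3_7_cnj nu3_8_cnj nu3_9_cnj nu3_10_cnj nu3_11_cnj nu3_12_cnj nu3_13_cnj nu3_14_cnj nu3_15_cnj nu4_0_cnj nu4_1_cnj nu4_2_cnj nu4_3_cnj nu4_4_cnj nu4_5_cnj nu4_6_cnj nu4_7_cnj nu4_8_cnj nu4_9_cnj nu4_10_cnj nu4_11_cnj nu4_12_cnj nu4_13_cnj nu4_14_cnj nu4_15_cnj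

definition QF0 :: "complex \<Rightarrow> complex \<Rightarrow> complex \<Rightarrow> complex \<Rightarrow> complex \<Rightarrow> complex \<Rightarrow> complex \<Rightarrow> complex \<Rightarrow> complex \<Rightarrow> complex \<Rightarrow> complex \<Rightarrow> complex \<Rightarrow> complex \<Rightarrow> complex \<Rightarrow> complex \<Rightarrow> complex \<Rightarrow> complex \<Rightarrow> complex \<Rightarrow> complex \<Rightarrow> complex \<Rightarrow> complex \<Rightarrow> complex \<Rightarrow> complex \<Rightarrow> complex \<Rightarrow> complex \<Rightarrow> complex \<Rightarrow> complex \<Rightarrow> complex \<Rightarrow> complex \<Rightarrow> complex \<Rightarrow> complex \<Rightarrow> complex \<Rightarrow> complex" where
  "QF0 m0 m1 m2 m3 m4 m5 m6 m7 m8 m9 m10 m11 m12 m13 m14 m15 n0 n1 n2 n3 n4 n5 n6 n7 n8 n9 n10 n11 n12 n13 n14 n15 = m0*((320)*n0 + (160)*n1 + (160)*n2 + (240)*n3 + (160)*n4 + (423)*n5 + (600)*n6 + (146)*n7 + (596)*n8 + (240)*n9 + (144)*n10 + (104)*n11 + (424)*n12 + (160)*n13 + (160)*n14 + (160)*n15) + m1*((160)*n0 + (320)*n1 + (105)*n2 + (144)*n3 + (160)*n4 + (434)*n5 + (600)*n6 + (106)*n7 + (442)*n8 + (160)*n9 + (240)*n10 + (160)*n11 + (604)*n12 + (240)*n13 + (160)*n14 + (114)*n15) + m2*((160)*n0 + (105)*n1 + (240)*n2 + (160)*n3 + (160)*n4 + (536)*n5 + (426)*n6 + (200)*n7 + (542)*n8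 + (144)*n9 + (98)*n10 + (132)*n11 + (387)*n12 + (103)*n13 + (134)*n14 + (240)*n15) + m3*((240)*n0 + (144)*n1 + (160)*n2 + (240)*n3 + (160)*n4 + (422)*n5 + (544)*n6 + (138)*n7 + (536)*n8 + (200)*n9 + (111)*n10 + (87)*n11 + (383)*n12 + (145)*n13 + (140)*n14 + (160)*n15) + m4*((160)*n0 + (160)*n1 + (160)*n2 + (160)*n3 + (320)*n4 + (640)*n5 + (640)*n6 + (144)*n7 + (432)*n8 + (136)*n9 + (160)*n10 + (160)*n11 + (414)*n12 + (136)*n13 + (102)*n14 + (160)*n15) + m5*((423)*n0 + (434)*n1 + (536)*n2 + (422)*n3 + (640)*n4 + (1928)*n5 + (1529)*n6 + (548)*n7 + (1455)*n8 + (385)*n9 + (426)*n10 + (640)*n11 + (1496)*n12 + (376)*n13 + (422)*n14 + (604)*n15) + m6*((600)*n0 + (600)*n1 + (426)*n2 + (544)*n3 + (640)*n4 + (1529)*n5 + (1954)*n6 + (409)*n7 + (1467)*n8 + (535)*n9 + (544)*n10 + (440)*n11 + (1464)*n12 + (536)*n13 + (424)*n14 + (451)*n15) + m7*((146)*n0 + (106)*n1 + (200)*n2 + (138)*n3 + (144)*n4 + (548)*n5 + (409)*n6 + (240)*n7 + (546)*n8 + (120)*n9 + (90)*n10 + (160)*n11 + (426)*n12 + (88)*n13 + (160)*n14 + (240)*n15) + m8*((596)*n0 + (442)*n1 + (542)*n2 + (536)*n3 + (432)*n4 + (1455)*n5 + (1467)*n6 + (546)*n7 + (1932)*n8 + (540)*n9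 + (394)*n10 + (432)*n11 + (1522)*n12 + (424)*n13 + (640)*n14 + (600)*n15) + m9*((240)*n0 + (160)*n1 + (144)*n2 + (200)*n3 + (136)*n4 + (385)*n5 + (535)*n6 + (120)*n7 + (540)*n8 + (240)*n9 + (144)*n10 + (104)*n11 + (432)*n12 + (160)*n13 + (160)*n14 + (144)*n15) + m10*((144)*n0 + (240)*n1 + (98)*n2 + (111)*n3 + (160)*n4 + (426)*n5 + (544)*n6 + (90)*n7 + (394)*n8 + (144)*n9 + (240)*n10 + (160)*n11 + (544)*n12 + (200)*n13 + (140)*n14 + (106)*n15) + m11*((104)*n0 + (160)*n1 + (132)*n2 + (87)*n3 + (160)*n4 + (640)*n5 + (440)*n6 + (160)*n7 + (432)*n8 + (104)*n9 + (160)*n10 + (320)*n11 + (640)*n12 + (136)*n13 + (160)*n14 + (160)*n15) + m12*((424)*n0 + (604)*n1 + (387)*n2 + (383)*n3 + (414)*n4 + (1496)*n5 + (1464)*n6 + (426)*n7 + (1522)*n8 + (432)*n9 + (544)*n10 + (640)*n11 + (1928)*n12 + (540)*n13 + (640)*n14 + (434)*n15) + m13*((160)*n0 + (240)*n1 + (103)*n2 + (145)*n3 + (136)*n4 + (376)*n5 + (536)*n6 + (88)*n7 + (424)*n8 + (160)*n9 + (200)*n10 + (136)*n11 + (540)*n12 + (240)*n13 + (160)*n14 + (104)*n15) + m14*((160)*n0 + (160)*n1 + (134)*n2 + (140)*n3 + (102)*n4 + (422)*n5 + (424)*n6 + (160)*n7 + (640)*n8 + (160)*n9 + (140)*n10 +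 (160)*n11 + (640)*n12 + (160)*n13 + (320)*n14 + (160)*n15) + m15*((160)*n0 + (114)*n1 + (240)*n2 + (160)*n3 + (160)*n4 + (604)*n5 + (451)*n6 + (240)*n7 + (600)*n8 + (144)*n9 + (106)*n10 + (160)*n11 + (434)*n12 + (104)*n13 + (160)*n14 + (320)*n15)"

definition QF1 :: "complex \<Rightarrow> complex \<Rightarrow> complex \<Rightarrow> complex \<Rightarrow> complex \<Rightarrow> complex \<Rightarrow> complex \<Rightarrow> complex \<Rightarrow> complex \<Rightarrow> complex \<Rightarrow> complex \<Rightarrow> complex \<Rightarrow> complex \<Rightarrow> complex \<Rightarrow> complex \<Rightarrow> complex \<Rightarrow> complex \<Rightarrow> complex \<Rightarrow> complex \<Rightarrow> complex \<Rightarrow> complex \<Rightarrow> complex \<Rightarrow> complex \<Rightarrow> complex \<Rightarrow> complex \<Rightarrow> complex \<Rightarrow> complex \<Rightarrow> complex \<Rightarrow> complex \<Rightarrow> complex \<Rightarrow> complex \<Rightarrow> complex \<Rightarrow> complex" where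
  "QF1 m0 m1 m2 m3 m4 m5 m6 m7 m8 m9 m10 m11 m12 m13 m14 m15 n0 n1 n2 n3 n4 n5 n6 n7 n8 n9 n10 n11 n12 n13 n14 n15 = m0*((400)*n0 + (160)*n1 + (668)*n2 + (431)*n3 + (666)*n4 + (160)*n5 + (248)*n6 + (102)*n7 + (120)*n8 + (248)*n9 + (32)*n10 + (126)*n11 + (188)*n12 + (469)*n13 + (113)*n14 + (186)*n15) + m1*((160)*n0 + (400)*n1 + (441)*n2 + (656)*n3 + (660)*n4 + (320)*n5 + (112)*n6 + (233)*n7 + (32)*n8 + (248)*n9 + (120)*n10 + (185)*n11 + (121)*n12 + (465)*n13 + (175)*n14 + (180)*n15) + m2*((668)*n0 + (441)*n1 + (1920)*n2 + (1470)*n3 + (1498)*n4 + (424)*n5 + (660)*n6 + (397)*n7 + (192)*n8 + (488)*n9 + (119)*n10 + (438)*n11 + (640)*n12 + (1496)*n13 + (368)*n14 + (434)*n15) + m3*((431)*n0 + (656)*n1 + (1470)*n2 + (1920)*n3 + (1486)*n4 + (640)*n5 + (416)*n6 + (600)*n7 + (88)*n8 + (480)*n9 + (208)*n10 + (552)*n11 + (408)*n12 + (1440)*n13 + (528)*n14 + (424)*n15) + m4*((666)*n0 + (660)*n1 + (1498)*n2 + (1486)*n3 + (1920)*n4 + (640)*n5 + (483)*n6 + (438)*n7 + (184)*n8 + (698)*n9 + (192)*n10 + (414)*n11 + (424)*n12 + (1486)*n13 + (432)*n14 + (640)*n15) + m5*((160)*n0 + (320)*n1 + (424)*n2 + (640)*n3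 + (640)*n4 + (320)*n5 + (111)*n6 + (177)*n7 + (24)*n8 + (188)*n9 + (80)*n10 + (152)*n11 + (104)*n12 + (424)*n13 + (160)*n14 + (160)*n15) + m6*((248)*n0 + (112)*n1 + (660)*n2 + (416)*n3 + (483)*n4 + (111)*n5 + (400)*n6 + (160)*n7 + (120)*n8 + (252)*n9 + (40)*n10 + (160)*n11 + (320)*n12 + (660)*n13 + (136)*n14 + (192)*n15) + m7*((102)*n0 + (233)*n1 + (397)*n2 + (600)*n3 + (438)*n4 + (177)*n5 + (160)*n6 + (400)*n7 + (28)*n8 + (240)*n9 + (120)*n10 + (240)*n11 + (160)*n12 + (600)*n13 + (236)*n14 + (184)*n15) + m8*((120)*n0 + (32)*n1 + (192)*n2 + (88)*n3 + (184)*n4 + (24)*n5 + (120)*n6 + (28)*n7 + (80)*n8 + (120)*n9 + (28)*n11 + (80)*n12 + (176)*n13 + (24)*n14 + (80)*n15) + m9*((248)*n0 + (248)*n1 + (488)*n2 + (480)*n3 + (698)*n4 + (188)*n5 + (252)*n6 + (240)*n7 + (120)*n8 + (480)*n9 + (120)*n10 + (184)*n11 + (192)*n12 + (680)*n13 + (176)*n14 + (320)*n15) + m10*((32)*n0 + (120)*n1 + (119)*n2 + (208)*n3 + (192)*n4 + (80)*n5 + (40)*n6 + (120)*n7 + (120)*n9 + (80)*n10 + (84)*n11 + (40)*n12 + (200)*n13 + (80)*n14 + (80)*n15) + m11*((126)*n0 + (185)*n1 + (438)*n2 + (552)*n3 + (414)*n4 + (152)*n5 + (160)*n6 + (240)*n7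 + (28)*n8 + (184)*n9 + (84)*n10 + (240)*n11 + (160)*n12 + (552)*n13 + (200)*n14 + (144)*n15) + m12*((188)*n0 + (121)*n1 + (640)*n2 + (408)*n3 + (424)*n4 + (104)*n5 + (320)*n6 + (160)*n7 + (80)*n8 + (192)*n9 + (40)*n10 + (160)*n11 + (320)*n12 + (640)*n13 + (128)*n14 + (160)*n15) + m13*((469)*n0 + (465)*n1 + (1496)*n2 + (1440)*n3 + (1486)*n4 + (424)*n5 + (660)*n6 + (600)*n7 + (176)*n8 + (680)*n9 + (200)*n10 + (552)*n11 + (640)*n12 + (1936)*n13 + (536)*n14 + (640)*n15) + m14*((113)*n0 + (175)*n1 + (368)*n2 + (528)*n3 + (432)*n4 + (160)*n5 + (136)*n6 + (236)*n7 + (24)*n8 + (176)*n9 + (80)*n10 + (200)*n11 + (128)*n12 + (536)*n13 + (240)*n14 + (160)*n15) + m15*((186)*n0 + (180)*n1 + (434)*n2 + (424)*n3 + (640)*n4 + (160)*n5 + (192)*n6 + (184)*n7 + (80)*n8 + (320)*n9 + (80)*n10 + (144)*n11 + (160)*n12 + (640)*n13 + (160)*n14 + (320)*n15)"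

definition QF2 :: "complex \<Rightarrow> complex \<Rightarrow> complex \<Rightarrow> complex \<Rightarrow> complex \<Rightarrow> complex \<Rightarrow> complex \<Rightarrow> complex \<Rightarrow> complex \<Rightarrow> complex \<Rightarrow> complex \<Rightarrow> complex \<Rightarrow> complex \<Rightarrow> complex \<Rightarrow> complex \<Rightarrow> complex \<Rightarrow> complex \<Rightarrow> complex \<Rightarrow> complex \<Rightarrow> complex \<Rightarrow> complex \<Rightarrow> complex \<Rightarrow> complex \<Rightarrow> complex \<Rightarrow> complex \<Rightarrow> complex \<Rightarrow> complex \<Rightarrow> complex \<Rightarrow> complex \<Rightarrow> complex \<Rightarrow> complex \<Rightarrow> complex \<Rightarrow> complex" where
  "QF2 m0 m1 m2 m3 m4 m5 m6 m7 m8 m9 m10 m11 m12 m13 m14 m15 n0 n1 n2 n3 n4 n5 n6 n7 n8 n9 n10 n11 n12 n13 n14 n15 = m0*((320)*n0 + (640)*n1 + (640)*n2 + (160)*n3 + (424)*n4 + (160)*n5 + (160)*n6 + (160)*n7 + (160)*n8 + (160)*n9 + (144)*n10 + (422)*n11 + (137)*n12 + (112)*n13 + (56)*n14 + (104)*n15) + m1*((640)*n0 + (1912)*n1 + (1480)*n2 + (440)*n3 + (1496)*n4 + (432)*n5 + (536)*n6 + (434)*n7 + (596)*n8 + (410)*n9 + (540)*n10 + (1459)*n11 + (368)*n12 + (424)*n13 + (152)*n14 + (424)*n15) + m2*((640)*n0 + (1480)*n1 + (1920)*n2 + (656)*n3 + (1496)*n4 + (640)*n5 + (424)*n6 + (543)*n7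 + (415)*n8 + (591)*n9 + (375)*n10 + (1455)*n11 + (537)*n12 + (464)*n13 + (216)*n14 + (432)*n15) + m3*((160)*n0 + (440)*n1 + (656)*n2 + (400)*n3 + (660)*n4 + (320)*n5 + (112)*n6 + (176)*n7 + (120)*n8 + (224)*n9 + (120)*n10 + (480)*n11 + (176)*n12 + (240)*n13 + (120)*n14 + (180)*n15) + m4*((424)*n0 + (1496)*n1 + (1496)*n2 + (660)*n3 + (1920)*n4 + (640)*n5 + (373)*n6 + (408)*n7 + (432)*n8 + (432)*n9 + (424)*n10 + (1504)*n11 + (416)*n12 + (660)*n13 + (200)*n14 + (640)*n15) + m5*((160)*n0 + (432)*n1 + (640)*n2 + (320)*n3 + (640)*n4 + (320)*n5 + (105)*n6 + (143)*n7 + (112)*n8 + (168)*n9 + (104)*n10 + (432)*n11 + (160)*n12 + (180)*n13 + (80)*n14 + (160)*n15) + m6*((160)*n0 + (536)*n1 + (424)*n2 + (112)*n3 + (373)*n4 + (105)*n5 + (240)*n6 + (160)*n7 + (240)*n8 + (160)*n9 + (200)*n10 + (536)*n11 + (136)*n12 + (140)*n13 + (48)*n14 + (128)*n15) + m7*((160)*n0 + (434)*n1 + (543)*n2 + (176)*n3 + (408)*n4 + (143)*n5 + (160)*n6 + (240)*n7 + (160)*n8 + (240)*n9 + (144)*n10 + (544)*n11 + (200)*n12 + (176)*n13 + (84)*n14 + (136)*n15) + m8*((160)*n0 + (596)*n1 + (415)*n2 + (120)*n3 + (432)*n4 + (112)*n5 + (240)*n6 + (160)*n7 + (320)*n8 +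 (160)*n9 + (240)*n10 + (596)*n11 + (136)*n12 + (160)*n13 + (56)*n14 + (160)*n15) + m9*((160)*n0 + (410)*n1 + (591)*n2 + (224)*n3 + (432)*n4 + (168)*n5 + (160)*n6 + (240)*n7 + (160)*n8 + (400)*n9 + (144)*n10 + (600)*n11 + (236)*n12 + (224)*n13 + (120)*n14 + (176)*n15) + m10*((144)*n0 + (540)*n1 + (375)*n2 + (120)*n3 + (424)*n4 + (104)*n5 + (200)*n6 + (144)*n7 + (240)*n8 + (144)*n9 + (240)*n10 + (552)*n11 + (112)*n12 + (160)*n13 + (48)*n14 + (160)*n15) + m11*((422)*n0 + (1459)*n1 + (1455)*n2 + (480)*n3 + (1504)*n4 + (432)*n5 + (536)*n6 + (544)*n7 + (596)*n8 + (600)*n9 + (552)*n10 + (1968)*n11 + (544)*n12 + (656)*n13 + (208)*n14 + (640)*n15) + m12*((137)*n0 + (368)*n1 + (537)*n2 + (176)*n3 + (416)*n4 + (160)*n5 + (136)*n6 + (200)*n7 + (136)*n8 + (236)*n9 + (112)*n10 + (544)*n11 + (240)*n12 + (176)*n13 + (80)*n14 + (160)*n15) + m13*((112)*n0 + (424)*n1 + (464)*n2 + (240)*n3 + (660)*n4 + (180)*n5 + (140)*n6 + (176)*n7 + (160)*n8 + (224)*n9 + (160)*n10 + (656)*n11 + (176)*n12 + (400)*n13 + (120)*n14 + (320)*n15) + m14*((56)*n0 + (152)*n1 + (216)*n2 + (120)*n3 + (200)*n4 + (80)*n5 + (48)*n6 + (84)*n7 + (56)*n8 + (120)*n9 + (48)*n10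 + (208)*n11 + (80)*n12 + (120)*n13 + (80)*n14 + (80)*n15) + m15*((104)*n0 + (424)*n1 + (432)*n2 + (180)*n3 + (640)*n4 + (160)*n5 + (128)*n6 + (136)*n7 + (160)*n8 + (176)*n9 + (160)*n10 + (640)*n11 + (160)*n12 + (320)*n13 + (80)*n14 + (320)*n15)"

definition QF3 :: "complex \<Rightarrow> complex \<Rightarrow> complex \<Rightarrow> complex \<Rightarrow> complex \<Rightarrow> complex \<Rightarrow> complex \<Rightarrow> complex \<Rightarrow> complex \<Rightarrow> complex \<Rightarrow> complex \<Rightarrow> complex \<Rightarrow> complex \<Rightarrow> complex \<Rightarrow> complex \<Rightarrow> complex \<Rightarrow> complex \<Rightarrow> complex \<Rightarrow> complex \<Rightarrow> complex \<Rightarrow> complex \<Rightarrow> complex \<Rightarrow> complex \<Rightarrow> complex \<Rightarrow> complex \<Rightarrow> complex \<Rightarrow> complex \<Rightarrow> complex \<Rightarrow> complex \<Rightarrow> complex \<Rightarrow> complex \<Rightarrow> complex \<Rightarrow> complex" where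
  "QF3 m0 m1 m2 m3 m4 m5 m6 m7 m8 m9 m10 m11 m12 m13 m14 m15 n0 n1 n2 n3 n4 n5 n6 n7 n8 n9 n10 n11 n12 n13 n14 n15 = m0*((1920)*n0 + (656)*n1 + (1496)*n2 + (640)*n3 + (1496)*n4 + (424)*n5 + (208)*n6 + (424)*n7 + (640)*n8 + (656)*n9 + (1504)*n10 + (438)*n11 + (408)*n12 + (416)*n13 + (424)*n14 + (384)*n15) + m1*((656)*n0 + (400)*n1 + (654)*n2 + (160)*n3 + (432)*n4 + (160)*n5 + (120)*n6 + (182)*n7 + (176)*n8 + (232)*n9 + (474)*n10 + (224)*n11 + (168)*n12 + (112)*n13 + (112)*n14 + (120)*n15) + m2*((1496)*n0 + (654)*n1 + (1928)*n2 + (432)*n3 + (1488)*n4 + (640)*n5 + (208)*n6 + (536)*n7 + (424)*n8 + (464)*n9 + (1456)*n10 + (604)*n11 + (548)*n12 + (384)*n13 + (416)*n14 + (424)*n15) + m3*((640)*n0 + (160)*n1 + (432)*n2 + (320)*n3 + (640)*n4 + (160)*n5 + (48)*n6 + (104)*n7 + (160)*n8 + (160)*n9 + (432)*n10 + (96)*n11 + (120)*n12 + (160)*n13 + (160)*n14 + (144)*n15) + m4*((1496)*n0 + (432)*n1 + (1488)*n2 + (640)*n3 + (1912)*n4 + (640)*n5 + (152)*n6 + (368)*n7 + (432)*n8 + (432)*n9 + (1448)*n10 + (408)*n11 + (432)*n12 + (536)*n13 + (596)*n14 + (540)*n15) + m5*((424)*n0 + (160)*n1 + (640)*n2 + (160)*n3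 + (640)*n4 + (320)*n5 + (56)*n6 + (132)*n7 + (104)*n8 + (112)*n9 + (424)*n10 + (160)*n11 + (160)*n12 + (140)*n13 + (160)*n14 + (160)*n15) + m6*((208)*n0 + (120)*n1 + (208)*n2 + (48)*n3 + (152)*n4 + (56)*n5 + (80)*n6 + (80)*n7 + (80)*n8 + (120)*n9 + (212)*n10 + (120)*n11 + (80)*n12 + (52)*n13 + (64)*n14 + (56)*n15) + m7*((424)*n0 + (182)*n1 + (536)*n2 + (104)*n3 + (368)*n4 + (132)*n5 + (80)*n6 + (240)*n7 + (160)*n8 + (176)*n9 + (536)*n10 + (240)*n11 + (200)*n12 + (104)*n13 + (144)*n14 + (144)*n15) + m8*((640)*n0 + (176)*n1 + (424)*n2 + (160)*n3 + (432)*n4 + (104)*n5 + (80)*n6 + (160)*n7 + (320)*n8 + (320)*n9 + (640)*n10 + (172)*n11 + (144)*n12 + (160)*n13 + (160)*n14 + (136)*n15) + m9*((656)*n0 + (232)*n1 + (464)*n2 + (160)*n3 + (432)*n4 + (112)*n5 + (120)*n6 + (176)*n7 + (320)*n8 + (400)*n9 + (656)*n10 + (216)*n11 + (168)*n12 + (160)*n13 + (160)*n14 + (144)*n15) + m10*((1504)*n0 + (474)*n1 + (1456)*n2 + (432)*n3 + (1448)*n4 + (424)*n5 + (212)*n6 + (536)*n7 + (640)*n8 + (656)*n9 + (1952)*n10 + (592)*n11 + (536)*n12 + (544)*n13 + (592)*n14 + (536)*n15) + m11*((438)*n0 + (224)*n1 + (604)*n2 + (96)*n3 + (408)*n4 +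 (160)*n5 + (120)*n6 + (240)*n7 + (172)*n8 + (216)*n9 + (592)*n10 + (400)*n11 + (240)*n12 + (144)*n13 + (160)*n14 + (160)*n15) + m12*((408)*n0 + (168)*n1 + (548)*n2 + (120)*n3 + (432)*n4 + (160)*n5 + (80)*n6 + (200)*n7 + (144)*n8 + (168)*n9 + (536)*n10 + (240)*n11 + (240)*n12 + (144)*n13 + (160)*n14 + (160)*n15) + m13*((416)*n0 + (112)*n1 + (384)*n2 + (160)*n3 + (536)*n4 + (140)*n5 + (52)*n6 + (104)*n7 + (160)*n8 + (160)*n9 + (544)*n10 + (144)*n11 + (144)*n12 + (240)*n13 + (240)*n14 + (200)*n15) + m14*((424)*n0 + (112)*n1 + (416)*n2 + (160)*n3 + (596)*n4 + (160)*n5 + (64)*n6 + (144)*n7 + (160)*n8 + (160)*n9 + (592)*n10 + (160)*n11 + (160)*n12 + (240)*n13 + (320)*n14 + (240)*n15) + m15*((384)*n0 + (120)*n1 + (424)*n2 + (144)*n3 + (540)*n4 + (160)*n5 + (56)*n6 + (144)*n7 + (136)*n8 + (144)*n9 + (536)*n10 + (160)*n11 + (160)*n12 + (200)*n13 + (240)*n14 + (240)*n15)"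

definition QF4 :: "complex \<Rightarrow> complex \<Rightarrow> complex \<Rightarrow> complex \<Rightarrow> complex \<Rightarrow> complex \<Rightarrow> complex \<Rightarrow> complex \<Rightarrow> complex \<Rightarrow> complex \<Rightarrow> complex \<Rightarrow> complex \<Rightarrow> complex \<Rightarrow> complex \<Rightarrow> complex \<Rightarrow> complex \<Rightarrow> complex \<Rightarrow> complex \<Rightarrow> complex \<Rightarrow> complex \<Rightarrow> complex \<Rightarrow> complex \<Rightarrow> complex \<Rightarrow> complex \<Rightarrow> complex \<Rightarrow> complex \<Rightarrow> complex \<Rightarrow> complex \<Rightarrow> complex \<Rightarrow> complex \<Rightarrow> complex \<Rightarrow> complex \<Rightarrow> complex" where
  "QF4 m0 m1 m2 m3 m4 m5 m6 m7 m8 m9 m10 m11 m12 m13 m14 m15 n0 n1 n2 n3 n4 n5 n6 n7 n8 n9 n10 n11 n12 n13 n14 n15 = m0*((1920)*n0 + (1478)*n1 + (664)*n2 + (1506)*n3 + (664)*n4 + (434)*n5 + (430)*n6 + (193)*n7 + (640)*n8 + (1480)*n9 + (695)*n10 + (408)*n11 + (438)*n12 + (184)*n13 + (432)*n14 + (472)*n15) + m1*((1478)*n0 + (1920)*n1 + (656)*n2 + (1478)*n3 + (424)*n4 + (640)*n5 + (530)*n6 + (208)*n7 + (424)*n8 + (1438)*n9 + (479)*n10 + (550)*n11 + (606)*n12 + (88)*n13 + (424)*n14 + (416)*n15) + m2*((664)*n0 + (656)*n1 + (400)*n2 + (432)*n3 + (160)*n4 + (160)*n5 + (176)*n6 + (120)*n7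 + (184)*n8 + (464)*n9 + (248)*n10 + (176)*n11 + (232)*n12 + (24)*n13 + (112)*n14 + (104)*n15) + m3*((1506)*n0 + (1478)*n1 + (432)*n2 + (1920)*n3 + (664)*n4 + (640)*n5 + (368)*n6 + (121)*n7 + (434)*n8 + (1480)*n9 + (496)*n10 + (430)*n11 + (406)*n12 + (200)*n13 + (640)*n14 + (656)*n15) + m4*((664)*n0 + (424)*n1 + (160)*n2 + (664)*n3 + (400)*n4 + (160)*n5 + (112)*n6 + (32)*n7 + (184)*n8 + (472)*n9 + (256)*n10 + (128)*n11 + (104)*n12 + (120)*n13 + (184)*n14 + (240)*n15) + m5*((434)*n0 + (640)*n1 + (160)*n2 + (640)*n3 + (160)*n4 + (320)*n5 + (130)*n6 + (48)*n7 + (114)*n8 + (426)*n9 + (112)*n10 + (160)*n11 + (160)*n12 + (40)*n13 + (160)*n14 + (160)*n15) + m6*((430)*n0 + (530)*n1 + (176)*n2 + (368)*n3 + (112)*n4 + (130)*n5 + (240)*n6 + (80)*n7 + (160)*n8 + (532)*n9 + (184)*n10 + (200)*n11 + (240)*n12 + (32)*n13 + (128)*n14 + (136)*n15) + m7*((193)*n0 + (208)*n1 + (120)*n2 + (121)*n3 + (32)*n4 + (48)*n5 + (80)*n6 + (80)*n7 + (80)*n8 + (200)*n9 + (120)*n10 + (80)*n11 + (120)*n12 + (-4)*n13 + (40)*n14 + (40)*n15) + m8*((640)*n0 + (424)*n1 + (184)*n2 + (434)*n3 + (184)*n4 + (114)*n5 + (160)*n6 + (80)*n7 + (320)*n8 +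 (640)*n9 + (320)*n10 + (148)*n11 + (176)*n12 + (80)*n13 + (160)*n14 + (184)*n15) + m9*((1480)*n0 + (1438)*n1 + (464)*n2 + (1480)*n3 + (472)*n4 + (426)*n5 + (532)*n6 + (200)*n7 + (640)*n8 + (1928)*n9 + (688)*n10 + (552)*n11 + (600)*n12 + (184)*n13 + (640)*n14 + (656)*n15) + m10*((695)*n0 + (479)*n1 + (248)*n2 + (496)*n3 + (256)*n4 + (112)*n5 + (184)*n6 + (120)*n7 + (320)*n8 + (688)*n9 + (488)*n10 + (184)*n11 + (240)*n12 + (120)*n13 + (192)*n14 + (248)*n15) + m11*((408)*n0 + (550)*n1 + (176)*n2 + (430)*n3 + (128)*n4 + (160)*n5 + (200)*n6 + (80)*n7 + (148)*n8 + (552)*n9 + (184)*n10 + (240)*n11 + (240)*n12 + (32)*n13 + (160)*n14 + (160)*n15) + m12*((438)*n0 + (606)*n1 + (232)*n2 + (406)*n3 + (104)*n4 + (160)*n5 + (240)*n6 + (120)*n7 + (176)*n8 + (600)*n9 + (240)*n10 + (240)*n11 + (400)*n12 + (32)*n13 + (160)*n14 + (160)*n15) + m13*((184)*n0 + (88)*n1 + (24)*n2 + (200)*n3 + (120)*n4 + (40)*n5 + (32)*n6 + (-4)*n7 + (80)*n8 + (184)*n9 + (120)*n10 + (32)*n11 + (32)*n12 + (80)*n13 + (80)*n14 + (120)*n15) + m14*((432)*n0 + (424)*n1 + (112)*n2 + (640)*n3 + (184)*n4 + (160)*n5 + (128)*n6 + (40)*n7 + (160)*n8 + (640)*n9 +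 (192)*n10 + (160)*n11 + (160)*n12 + (80)*n13 + (320)*n14 + (320)*n15) + m15*((472)*n0 + (416)*n1 + (104)*n2 + (656)*n3 + (240)*n4 + (160)*n5 + (136)*n6 + (40)*n7 + (184)*n8 + (656)*n9 + (248)*n10 + (160)*n11 + (160)*n12 + (120)*n13 + (320)*n14 + (400)*n15)"

lemma cert_main:
  fixes u1 u2 u3 u4 u5 w1 w2 w3 w4 w5 :: complex
  shows "80*(Gp u1 u2 u3 u4 u5 * Hp w1 w2 w3 w4 w5 - Gp w1 w2 w3 w4 w5 * Hp u1 u2 u3 u4 u5) = (u1 - w1)*QF0 (nu0_0 w1 w2 w3 w4 w5) (nu0_1 w1 w2 w3 w4 w5) (nu0_2 w1 w2 w3 w4 w5) (nu0_3 w1 w2 w3 w4 w5) (nu0_4 w1 w2 w3 w4 w5) (nu0_5 w1 w2 w3 w4 w5) (nu0_6 w1 w2 w3 w4 w5) (nu0_7 w1 w2 w3 w4 w5) (nu0_8 w1 w2 w3 w4 w5) (nu0_9 w1 w2 w3 w4 w5) (nu0_10 w1 w2 w3 w4 w5) (nu0_11 w1 w2 w3 w4 w5) (nu0_12 w1 w2 w3 w4 w5) (nu0_13 w1 w2 w3 w4 w5) (nu0_14 w1 w2 w3 w4 w5) (nu0_15 w1 w2 w3 w4 w5) (nu0_0 u1 u2 u3 u4 u5) (nu0_1 u1 u2 u3 u4 u5) (nu0_2 u1 u2 u3 u4 u5) (nu0_3 u1 u2 u3 u4 u5) (nu0_4 u1 u2 u3 u4 u5) (nu0_5 u1 u2 u3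 u4 u5) (nu0_6 u1 u2 u3 u4 u5) (nu0_7 u1 u2 u3 u4 u5) (nu0_8 u1 u2 u3 u4 u5) (nu0_9 u1 u2 u3 u4 u5) (nu0_10 u1 u2 u3 u4 u5) (nu0_11 u1 u2 u3 u4 u5) (nu0_12 u1 u2 u3 u4 u5) (nu0_13 u1 u2 u3 u4 u5) (nu0_14 u1 u2 u3 u4 u5) (nu0_15 u1 u2 u3 u4 u5) + (u2 - w2)*QF1 (nu1_0 w1 w2 w3 w4 w5) (nu1_1 w1 w2 w3 w4 w5) (nu1_2 w1 w2 w3 w4 w5) (nu1_3 w1 w2 w3 w4 w5) (nu1_4 w1 w2 w3 w4 w5) (nu1_5 w1 w2 w3 w4 w5) (nu1_6 w1 w2 w3 w4 w5) (nu1_7 w1 w2 w3 w4 w5) (nu1_8 w1 w2 w3 w4 w5) (nu1_9 w1 w2 w3 w4 w5) (nu1_10 w1 w2 w3 w4 w5) (nu1_11 w1 w2 w3 w4 w5) (nu1_12 w1 w2 w3 w4 w5) (nu1_13 w1 w2 w3 w4 w5) (nu1_14 w1 w2 w3 w4 w5) (nu1_15 w1 w2 w3 w4 w5) (nu1_0 u1 u2 u3 u4 u5) (nu1_1 u1 u2 u3 u4 u5) (nu1_2 u1 u2 u3 u4 u5) (nu1_3 u1 u2 u3 u4 u5) (nu1_4 u1 u2 u3 u4 u5) (nu1_5 u1 u2 u3 u4 u5) (nu1_6 u1 u2 u3 u4 u5) (nu1_7 u1 u2 u3 u4 u5) (nu1_8 u1 u2 u3 u4 u5) (nu1_9 u1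 u2 u3 u4 u5) (nu1_10 u1 u2 u3 u4 u5) (nu1_11 u1 u2 u3 u4 u5) (nu1_12 u1 u2 u3 u4 u5) (nu1_13 u1 u2 u3 u4 u5) (nu1_14 u1 u2 u3 u4 u5) (nu1_15 u1 u2 u3 u4 u5) + (u3 - w3)*QF2 (nu2_0 w1 w2 w3 w4 w5) (nu2_1 w1 w2 w3 w4 w5) (nu2_2 w1 w2 w3 w4 w5) (nu2_3 w1 w2 w3 w4 w5) (nu2_4 w1 w2 w3 w4 w5) (nu2_5 w1 w2 w3 w4 w5) (nu2_6 w1 w2 w3 w4 w5) (nu2_7 w1 w2 w3 w4 w5) (nu2_8 w1 w2 w3 w4 w5) (nu2_9 w1 w2 w3 w4 w5) (nu2_10 w1 w2 w3 w4 w5) (nu2_11 w1 w2 w3 w4 w5) (nu2_12 w1 w2 w3 w4 w5) (nu2_13 w1 w2 w3 w4 w5) (nu2_14 w1 w2 w3 w4 w5) (nu2_15 w1 w2 w3 w4 w5) (nu2_0 u1 u2 u3 u4 u5) (nu2_1 u1 u2 u3 u4 u5) (nu2_2 u1 u2 u3 u4 u5) (nu2_3 u1 u2 u3 u4 u5) (nu2_4 u1 u2 u3 u4 u5) (nu2_5 u1 u2 u3 u4 u5) (nu2_6 u1 u2 u3 u4 u5) (nu2_7 u1 u2 u3 u4 u5) (nu2_8 u1 u2 u3 u4 u5) (nu2_9 u1 u2 u3 u4 u5) (nu2_10 u1 u2 u3 u4 u5) (nu2_11 u1 u2 u3 u4 u5) (nu2_12 u1 u2 u3 u4 u5) (nu2_13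 u1 u2 u3 u4 u5) (nu2_14 u1 u2 u3 u4 u5) (nu2_15 u1 u2 u3 u4 u5) + (u4 - w4)*QF3 (nu3_0 w1 w2 w3 w4 w5) (nu3_1 w1 w2 w3 w4 w5) (nu3_2 w1 w2 w3 w4 w5) (nu3_3 w1 w2 w3 w4 w5) (nu3_4 w1 w2 w3 w4 w5) (nu3_5 w1 w2 w3 w4 w5) (nu3_6 w1 w2 w3 w4 w5) (nu3_7 w1 w2 w3 w4 w5) (nu3_8 w1 w2 w3 w4 w5) (nu3_9 w1 w2 w3 w4 w5) (nu3_10 w1 w2 w3 w4 w5) (nu3_11 w1 w2 w3 w4 w5) (nu3_12 w1 w2 w3 w4 w5) (nu3_13 w1 w2 w3 w4 w5) (nu3_14 w1 w2 w3 w4 w5) (nu3_15 w1 w2 w3 w4 w5) (nu3_0 u1 u2 u3 u4 u5) (nu3_1 u1 u2 u3 u4 u5) (nu3_2 u1 u2 u3 u4 u5) (nu3_3 u1 u2 u3 u4 u5) (nu3_4 u1 u2 u3 u4 u5) (nu3_5 u1 u2 u3 u4 u5) (nu3_6 u1 u2 u3 u4 u5) (nu3_7 u1 u2 u3 u4 u5) (nu3_8 u1 u2 u3 u4 u5) (nu3_9 u1 u2 u3 u4 u5) (nu3_10 u1 u2 u3 u4 u5) (nu3_11 u1 u2 u3 u4 u5) (nu3_12 u1 u2 u3 u4 u5) (nu3_13 u1 u2 u3 u4 u5) (nu3_14 u1 u2 u3 u4 u5) (nu3_15 u1 u2 u3 u4 u5) + (u5 - w5)*QF4 (nu4_0 w1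 w2 w3 w4 w5) (nu4_1 w1 w2 w3 w4 w5) (nu4_2 w1 w2 w3 w4 w5) (nu4_3 w1 w2 w3 w4 w5) (nu4_4 w1 w2 w3 w4 w5) (nu4_5 w1 w2 w3 w4 w5) (nu4_6 w1 w2 w3 w4 w5) (nu4_7 w1 w2 w3 w4 w5) (nu4_8 w1 w2 w3 w4 w5) (nu4_9 w1 w2 w3 w4 w5) (nu4_10 w1 w2 w3 w4 w5) (nu4_11 w1 w2 w3 w4 w5) (nu4_12 w1 w2 w3 w4 w5) (nu4_13 w1 w2 w3 w4 w5) (nu4_14 w1 w2 w3 w4 w5) (nu4_15 w1 w2 w3 w4 w5) (nu4_0 u1 u2 u3 u4 u5) (nu4_1 u1 u2 u3 u4 u5) (nu4_2 u1 u2 u3 u4 u5) (nu4_3 u1 u2 u3 u4 u5) (nu4_4 u1 u2 u3 u4 u5) (nu4_5 u1 u2 u3 u4 u5) (nu4_6 u1 u2 u3 u4 u5) (nu4_7 u1 u2 u3 u4 u5) (nu4_8 u1 u2 u3 u4 u5) (nu4_9 u1 u2 u3 u4 u5) (nu4_10 u1 u2 u3 u4 u5) (nu4_11 u1 u2 u3 u4 u5) (nu4_12 u1 u2 u3 u4 u5) (nu4_13 u1 u2 u3 u4 u5) (nu4_14 u1 u2 u3 u4 u5) (nu4_15 u1 u2 u3 u4 u5)"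
  unfolding Gp_def Hp_def QF0_def QF1_def QF2_def QF3_def QF4_def nu_defs by algebra

definition rk0 :: "complex \<Rightarrow> complex \<Rightarrow> complex \<Rightarrow> complex \<Rightarrow> complex \<Rightarrow> complex \<Rightarrow> complex \<Rightarrow> complex \<Rightarrow> complex \<Rightarrow> complex \<Rightarrow> complex \<Rightarrow> complex \<Rightarrow> complex \<Rightarrow> complex \<Rightarrow> complex \<Rightarrow> complex \<Rightarrow> real" where
  "rk0 n0 n1 n2 n3 n4 n5 n6 n7 n8 n9 n10 n11 n12 n13 n14 n15 = (1/320) * (cmod ((320)*n0 + (160)*n1 + (160)*n2 + (240)*n3 + (160)*n4 + (423)*n5 + (600)*n6 + (146)*n7 + (596)*n8 + (240)*n9 + (144)*n10 + (104)*n11 + (424)*n12 + (160)*n13 + (160)*n14 + (160)*n15))^2 + (1/960) * (cmod ((480)*n1 + (50)*n2 + (48)*n3 + (160)*n4 + (445)*n5 + (600)*n6 + (66)*n7 + (288)*n8 + (80)*n9 + (336)*n10 + (216)*n11 + (784)*n12 + (320)*n13 + (160)*n14 + (68)*n15))^2 + (1/1450560) * (cmod ((15110)*n2 + (3600)*n3 + (6880)*n4 + (28927)*n5 + (9096)*n6 + (11862)*n7 + (21984)*n8 + (1904)*n9 + (816)*n10 + (6600)*n11 + (12880)*n12 + (608)*n13 + (4384)*n14 + (15020)*n15))^2 + (1/44443707840) * (cmod ((1470672)*n3 + (451040)*n4 + (323625)*n5 + (1251880)*n6 + (-128106)*n7 + (605612)*n8 + (340720)*n9 + (-478236)*n10 +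 (-549396)*n11 + (-186324)*n12 + (226380)*n13 + (33840)*n14 + (-20448)*n15))^2 + (1/372006482400) * (cmod ((8094400)*n4 + (9828150)*n5 + (8463392)*n6 + (231570)*n7 + (-1122128)*n8 + (-451396)*n9 + (1515855)*n10 + (2126583)*n11 + (557682)*n12 + (-115563)*n13 + (-1185885)*n14 + (-108720)*n15))^2 + (1/53021599446160) * (cmod ((131008103)*n5 + (17664136)*n6 + (33460614)*n7 + (48766556)*n8 + (866804)*n9 + (10952494)*n10 + (88472118)*n11 + (122176533)*n12 + (2204358)*n13 + (32374219)*n14 + (26093200)*n15))^2 + (1/7005415334506618047400) * (cmod ((1069462907116)*n6 + (44607387520)*n7 + (156352780786)*n8 + (153568226982)*n9 + (224144677815)*n10 + (40829518159)*n11 + (328117849496)*n12 + (181482637941)*n13 + (76969438825)*n14 + (56797531890)*n15))^2 + (1/22845057925751501351855669280) * (cmod ((1068062191486254)*n7 + (966224446611912)*n8 + (-231684193844564)*n9 + (-345095426688585)*n10 + (-326648603498545)*n11 + (-144435371497426)*n12 + (-295047576970499)*n13 + (429170581092567)*n14 + (485082346141520)*n15))^2 + (1/16986009165765436945742316504856) * (cmod ((71566095921417338)*n8 + (9425947912797350)*n9 + (5516359533639835)*n10 + (4487436976112555)*n11 + (45696893400470646)*n12 + (5637728765337065)*n13 + (41268563474345139)*n14 + (1929973417534858)*n15))^2 + (1/60923474135276788721149115526874657008) * (cmod ((47293867415602768012)*n9 + (1006096228883917140)*n10 + (-2595926527710585268)*n11 + (-2766667485152982901)*n12 + (675542709169531408)*n13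 + (-1998180145343783949)*n14 + (1056076569649997672)*n15))^2 + (1/65676239345951907712808773063194171466144) * (cmod ((1388684050065328187512)*n10 + (-313109873886494840488)*n11 + (688808615610557450601)*n12 + (283941001438434848164)*n13 + (-61778136856465780131)*n14 + (68563441392364171728)*n15))^2 + (1/4013537286967335577817833419028269726138992) * (cmod ((11560692403080530254664)*n11 + (15607692669163597095481)*n12 + (1260603667413587833884)*n13 + (-126265176975427926987)*n14 + (-4285524462183722509384)*n15))^2 + (1/259085443181583193739041654169838524464521032352) * (cmod ((5602723309041285431376717)*n12 + (1106533284102066213982700)*n13 + (3461727144826598259978617)*n14 + (-727901789175942903157344)*n15))^2 + (1/68779854500929693438350907783353491554391488397823) * (cmod ((49104587685019208516522476)*n13 + (-2327689799443249840666535)*n14 + (3253705248033890052479034)*n15))^2 + (1/3146382585844064218335035330119846577036662363570229) * (cmod ((256300499336355108241938191)*n14 + (29256140210907675342766458)*n15))^2 + (12471070887697691922543292048/256300499336355108241938191) * (cmod (n15))^2"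

lemma psd0:
  fixes n0 n1 n2 n3 n4 n5 n6 n7 n8 n9 n10 n11 n12 n13 n14 n15 :: complex
  shows "QF0 (cnj n0) (cnj n1) (cnj n2) (cnj n3) (cnj n4) (cnj n5) (cnj n6) (cnj n7) (cnj n8) (cnj n9) (cnj n10) (cnj n11) (cnj n12) (cnj n13) (cnj n14) (cnj n15) n0 n1 n2 n3 n4 n5 n6 n7 n8 n9 n10 n11 n12 n13 n14 n15 = (1/320) * (cnj ((320)*n0 + (160)*n1 + (160)*n2 + (240)*n3 + (160)*n4 + (423)*n5 + (600)*n6 + (146)*n7 + (596)*n8 + (240)*n9 + (144)*n10 + (104)*n11 + (424)*n12 + (160)*n13 + (160)*n14 + (160)*n15) * ((320)*n0 + (160)*n1 + (160)*n2 + (240)*n3 + (160)*n4 + (423)*n5 + (600)*n6 + (146)*n7 + (596)*n8 + (240)*n9 + (144)*n10 + (104)*n11 + (424)*n12 + (160)*n13 + (160)*n14 + (160)*n15)) + (1/960) * (cnj ((480)*n1 + (50)*n2 + (48)*n3 + (160)*n4 + (445)*n5 + (600)*n6 + (66)*n7 + (288)*n8 + (80)*n9 + (336)*n10 + (216)*n11 + (784)*n12 + (320)*n13 + (160)*n14 + (68)*n15) * ((480)*n1 + (50)*n2 + (48)*n3 + (160)*n4 + (445)*n5 + (600)*n6 + (66)*n7 + (288)*n8 + (80)*n9 + (336)*n10 + (216)*n11 + (784)*n12 + (320)*n13 + (160)*n14 + (68)*n15)) + (1/1450560) * (cnj ((15110)*n2 + (3600)*n3 + (6880)*n4 + (28927)*n5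 + (9096)*n6 + (11862)*n7 + (21984)*n8 + (1904)*n9 + (816)*n10 + (6600)*n11 + (12880)*n12 + (608)*n13 + (4384)*n14 + (15020)*n15) * ((15110)*n2 + (3600)*n3 + (6880)*n4 + (28927)*n5 + (9096)*n6 + (11862)*n7 + (21984)*n8 + (1904)*n9 + (816)*n10 + (6600)*n11 + (12880)*n12 + (608)*n13 + (4384)*n14 + (15020)*n15)) + (1/44443707840) * (cnj ((1470672)*n3 + (451040)*n4 + (323625)*n5 + (1251880)*n6 + (-128106)*n7 + (605612)*n8 + (340720)*n9 + (-478236)*n10 + (-549396)*n11 + (-186324)*n12 + (226380)*n13 + (33840)*n14 + (-20448)*n15) * ((1470672)*n3 + (451040)*n4 + (323625)*n5 + (1251880)*n6 + (-128106)*n7 + (605612)*n8 + (340720)*n9 + (-478236)*n10 + (-549396)*n11 + (-186324)*n12 + (226380)*n13 + (33840)*n14 + (-20448)*n15)) + (1/372006482400) * (cnj ((8094400)*n4 + (9828150)*n5 + (8463392)*n6 + (231570)*n7 + (-1122128)*n8 + (-451396)*n9 + (1515855)*n10 + (2126583)*n11 + (557682)*n12 + (-115563)*n13 + (-1185885)*n14 + (-108720)*n15) * ((8094400)*n4 + (9828150)*n5 + (8463392)*n6 + (231570)*n7 + (-1122128)*n8 + (-451396)*n9 + (1515855)*n10 + (2126583)*n11 + (557682)*n12 + (-115563)*n13 + (-1185885)*n14 + (-108720)*n15)) + (1/53021599446160) * (cnj ((131008103)*n5 + (17664136)*n6 + (33460614)*n7 + (48766556)*n8 + (866804)*n9 +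 (10952494)*n10 + (88472118)*n11 + (122176533)*n12 + (2204358)*n13 + (32374219)*n14 + (26093200)*n15) * ((131008103)*n5 + (17664136)*n6 + (33460614)*n7 + (48766556)*n8 + (866804)*n9 + (10952494)*n10 + (88472118)*n11 + (122176533)*n12 + (2204358)*n13 + (32374219)*n14 + (26093200)*n15)) + (1/7005415334506618047400) * (cnj ((1069462907116)*n6 + (44607387520)*n7 + (156352780786)*n8 + (153568226982)*n9 + (224144677815)*n10 + (40829518159)*n11 + (328117849496)*n12 + (181482637941)*n13 + (76969438825)*n14 + (56797531890)*n15) * ((1069462907116)*n6 + (44607387520)*n7 + (156352780786)*n8 + (153568226982)*n9 + (224144677815)*n10 + (40829518159)*n11 + (328117849496)*n12 + (181482637941)*n13 + (76969438825)*n14 + (56797531890)*n15)) + (1/22845057925751501351855669280) * (cnj ((1068062191486254)*n7 + (966224446611912)*n8 + (-231684193844564)*n9 + (-345095426688585)*n10 + (-326648603498545)*n11 + (-144435371497426)*n12 + (-295047576970499)*n13 + (429170581092567)*n14 + (485082346141520)*n15) * ((1068062191486254)*n7 + (966224446611912)*n8 + (-231684193844564)*n9 + (-345095426688585)*n10 + (-326648603498545)*n11 + (-144435371497426)*n12 + (-295047576970499)*n13 + (429170581092567)*n14 + (485082346141520)*n15)) + (1/16986009165765436945742316504856) * (cnj ((71566095921417338)*n8 + (9425947912797350)*n9 + (5516359533639835)*n10 + (4487436976112555)*n11 + (45696893400470646)*n12 + (5637728765337065)*n13 + (41268563474345139)*n14 + (1929973417534858)*n15) * ((71566095921417338)*n8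 + (9425947912797350)*n9 + (5516359533639835)*n10 + (4487436976112555)*n11 + (45696893400470646)*n12 + (5637728765337065)*n13 + (41268563474345139)*n14 + (1929973417534858)*n15)) + (1/60923474135276788721149115526874657008) * (cnj ((47293867415602768012)*n9 + (1006096228883917140)*n10 + (-2595926527710585268)*n11 + (-2766667485152982901)*n12 + (675542709169531408)*n13 + (-1998180145343783949)*n14 + (1056076569649997672)*n15) * ((47293867415602768012)*n9 + (1006096228883917140)*n10 + (-2595926527710585268)*n11 + (-2766667485152982901)*n12 + (675542709169531408)*n13 + (-1998180145343783949)*n14 + (1056076569649997672)*n15)) + (1/65676239345951907712808773063194171466144) * (cnj ((1388684050065328187512)*n10 + (-313109873886494840488)*n11 + (688808615610557450601)*n12 + (283941001438434848164)*n13 + (-61778136856465780131)*n14 + (68563441392364171728)*n15) * ((1388684050065328187512)*n10 + (-313109873886494840488)*n11 + (688808615610557450601)*n12 + (283941001438434848164)*n13 + (-61778136856465780131)*n14 + (68563441392364171728)*n15)) + (1/4013537286967335577817833419028269726138992) * (cnj ((11560692403080530254664)*n11 + (15607692669163597095481)*n12 + (1260603667413587833884)*n13 + (-126265176975427926987)*n14 + (-4285524462183722509384)*n15) * ((11560692403080530254664)*n11 + (15607692669163597095481)*n12 + (1260603667413587833884)*n13 + (-126265176975427926987)*n14 + (-4285524462183722509384)*n15)) + (1/259085443181583193739041654169838524464521032352) * (cnj ((5602723309041285431376717)*n12 + (1106533284102066213982700)*n13 + (3461727144826598259978617)*n14 + (-727901789175942903157344)*n15) * ((5602723309041285431376717)*n12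 + (1106533284102066213982700)*n13 + (3461727144826598259978617)*n14 + (-727901789175942903157344)*n15)) + (1/68779854500929693438350907783353491554391488397823) * (cnj ((49104587685019208516522476)*n13 + (-2327689799443249840666535)*n14 + (3253705248033890052479034)*n15) * ((49104587685019208516522476)*n13 + (-2327689799443249840666535)*n14 + (3253705248033890052479034)*n15)) + (1/3146382585844064218335035330119846577036662363570229) * (cnj ((256300499336355108241938191)*n14 + (29256140210907675342766458)*n15) * ((256300499336355108241938191)*n14 + (29256140210907675342766458)*n15)) + (12471070887697691922543292048/256300499336355108241938191) * (cnj (n15) * (n15))"
  unfolding QF0_def by (simp only: complex_cnj_add complex_cnj_mult complex_cnj_minus complex_cnj_numeral complex_cnj_one) algebra

lemma psdr0:
  "QF0 (cnj n0) (cnj n1) (cnj n2) (cnj n3) (cnj n4) (cnj n5) (cnj n6) (cnj n7) (cnj n8) (cnj n9) (cnj n10) (cnj n11) (cnj n12) (cnj n13) (cnj n14) (cnj n15) n0 n1 n2 n3 n4 n5 n6 n7 n8 n9 n10 n11 n12 n13 n14 n15 = complex_of_real (rk0 n0 n1 n2 n3 n4 n5 n6 n7 n8 n9 n10 n11 n12 n13 n14 n15)"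
  unfolding psd0 rk0_def cnj_self by simp

lemma lastzero0: "(1/320) * a0 + (1/960) * a1 + (1/1450560) * a2 + (1/44443707840) * a3 + (1/372006482400) * a4 + (1/53021599446160) * a5 + (1/7005415334506618047400) * a6 + (1/22845057925751501351855669280) * a7 + (1/16986009165765436945742316504856) * a8 + (1/60923474135276788721149115526874657008) * a9 + (1/65676239345951907712808773063194171466144) * a10 + (1/4013537286967335577817833419028269726138992) * a11 + (1/259085443181583193739041654169838524464521032352) * a12 + (1/68779854500929693438350907783353491554391488397823) * a13 + (1/3146382585844064218335035330119846577036662363570229) * a14 + (12471070887697691922543292048/256300499336355108241938191) * a15 = 0 \<Longrightarrow> 0 \<le> (a0::real) \<Longrightarrow> 0 \<le> (a1::real) \<Longrightarrow> 0 \<le> (a2::real) \<Longrightarrow> 0 \<le> (a3::real) \<Longrightarrow> 0 \<le> (a4::real) \<Longrightarrow> 0 \<le> (a5::real) \<Longrightarrow> 0 \<le> (a6::real) \<Longrightarrow> 0 \<le> (a7::real) \<Longrightarrow> 0 \<le> (a8::real) \<Longrightarrow> 0 \<le> (a9::real) \<Longrightarrow> 0 \<le> (a10::real) \<Longrightarrow> 0 \<le> (a11::real) \<Longrightarrow> 0 \<le> (a12::real) \<Longrightarrow> 0 \<le> (a13::real) \<Longrightarrow> 0 \<le> (a14::real) \<Longrightarrow> 0 \<le> (a15::real) \<Longrightarrow> a15 = 0"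
  by linarith

lemma rk0_nonneg: "0 \<le> rk0 n0 n1 n2 n3 n4 n5 n6 n7 n8 n9 n10 n11 n12 n13 n14 n15"
  unfolding rk0_def by simp

definition rk1 :: "complex \<Rightarrow> complex \<Rightarrow> complex \<Rightarrow> complex \<Rightarrow> complex \<Rightarrow> complex \<Rightarrow> complex \<Rightarrow> complex \<Rightarrow> complex \<Rightarrow> complex \<Rightarrow> complex \<Rightarrow> complex \<Rightarrow> complex \<Rightarrow> complex \<Rightarrow> complex \<Rightarrow> complex \<Rightarrow> real" where
  "rk1 n0 n1 n2 n3 n4 n5 n6 n7 n8 n9 n10 n11 n12 n13 n14 n15 = (1/400) * (cmod ((400)*n0 + (160)*n1 + (668)*n2 + (431)*n3 + (666)*n4 + (160)*n5 + (248)*n6 + (102)*n7 + (120)*n8 + (248)*n9 + (32)*n10 + (126)*n11 + (188)*n12 + (469)*n13 + (113)*n14 + (186)*n15))^2 + (1/8400) * (cmod ((1680)*n1 + (869)*n2 + (2418)*n3 + (1968)*n4 + (1280)*n5 + (64)*n6 + (961)*n7 + (-80)*n8 + (744)*n9 + (536)*n10 + (673)*n11 + (229)*n12 + (1387)*n13 + (649)*n14 + (528)*n15))^2 + (1/2016717360) * (cmod ((1200427)*n2 + (840138)*n3 + (306072)*n4 + (40960)*n5 + (401888)*n6 + (213767)*n7 + (-208)*n8 + (-5256)*n9 + (16984)*n10 + (265367)*n11 + (507947)*n12 + (956393)*n13 + (188411)*n14 + (115512)*n15))^2 + (1/3777269626168189040) * (cmod ((39332562769)*n3 + (7142690678)*n4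 + (7882431840)*n5 + (-3559422264)*n6 + (11947778614)*n7 + (-1746359928)*n8 + (77198632)*n9 + (1167128096)*n10 + (10751862718)*n11 + (-6923423680)*n12 + (13154169927)*n13 + (13534445939)*n14 + (2254463798)*n15))^2 + (1/327804479021362074472) * (cmod ((308364491656)*n4 + (55908024096)*n5 + (874837111)*n6 + (-12771696360)*n7 + (6672432344)*n8 + (118447502002)*n9 + (8885161044)*n10 + (-14956754580)*n11 + (-7089719670)*n12 + (223384842278)*n13 + (39987114068)*n14 + (196464097628)*n15))^2 + (1/69432992236903343252664512) * (cmod ((48684395474368)*n5 + (1659795651199)*n6 + (-53245515749219)*n7 + (-13262082456936)*n8 + (-63932126923292)*n9 + (-26772503117504)*n10 + (-37406268322880)*n11 + (-1076399517480)*n12 + (-85465755255192)*n13 + (-32781740808040)*n14 + (-50508914225264)*n15))^2 + (1/384604401695234738129473683264) * (cmod ((7899952293702123)*n6 + (2892077138532073)*n7 + (2186151106230392)*n8 + (4620332627523204)*n9 + (701432505996064)*n10 + (1700856458842848)*n11 + (4575989949982184)*n12 + (8856004772050392)*n13 + (1795471567840280)*n14 + (2553284596262128)*n15))^2 + (1/561262614044900651550267602682015768) * (cmod ((8880791193073749577)*n7 + (-900654107639657632)*n8 + (808982349830741418)*n9 + (1236686191627731604)*n10 + (1686195498376240860)*n11 + (1163386861744726238)*n12 + (3495692269397485074)*n13 + (2090163372577763516)*n14 + (411473204985166708)*n15))^2 + (1/441588790338821287914676415676864621) * (cmod ((3381234519561626964)*n8 + (1715294572116526636)*n9 + (-1469377167921401740)*n10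 + (-1592615923879686749)*n11 + (-205386417288542094)*n12 + (-1424977462003678572)*n13 + (-1484826119507961260)*n14 + (363502886622820700)*n15))^2 + (1/4921366562752101166631077111192307919078) * (cmod ((684938353906681187548)*n9 + (146165524566420379247)*n10 + (7387128396213659965)*n11 + (16825596056273080557)*n12 + (23646815052881346975)*n13 + (-106169081010148600559)*n14 + (57439476885447261386)*n15))^2 + (1/2220890296945776648218791295959661498062378) * (cmod ((6484934839109213782547)*n10 + (-320189850463067734617)*n11 + (-1406134869537505777253)*n12 + (-2208831748028386350403)*n13 + (132654465657800359967)*n14 + (-377156639065894905582)*n15))^2 + (1/1751302538903780826931708533592106008031088311) * (cmod ((270057075722960378721613)*n11 + (62894842648348892149120)*n12 + (251876983023204109377066)*n13 + (89868336805096639994298)*n14 + (-52618467557673334083196)*n15))^2 + (4/445660971421690678562165462183505879176000897261) * (cmod ((1650247342079918606641697)*n12 + (3017075157491699120124611)*n13 + (387564327030149771943393)*n14 + (478147421293073184694666)*n15))^2 + (2/4234729308114878238091668276819109810969802796221) * (cmod ((10264471755555289766829172)*n13 + (2130878935282146310849406)*n14 + (2028542040614031177038607)*n15))^2 + (2/32859298426841295703840064276871570336431027497587) * (cmod ((25610123314184065015932318)*n14 + (-7694690825675608915176095)*n15))^2 + (133217818171138177023176272/12805061657092032507966159) * (cmod (n15))^2"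

lemma psd1:
  fixes n0 n1 n2 n3 n4 n5 n6 n7 n8 n9 n10 n11 n12 n13 n14 n15 :: complex
  shows "QF1 (cnj n0) (cnj n1) (cnj n2) (cnj n3) (cnj n4) (cnj n5) (cnj n6) (cnj n7) (cnj n8) (cnj n9) (cnj n10) (cnj n11) (cnj n12) (cnj n13) (cnj n14) (cnj n15) n0 n1 n2 n3 n4 n5 n6 n7 n8 n9 n10 n11 n12 n13 n14 n15 = (1/400) * (cnj ((400)*n0 + (160)*n1 + (668)*n2 + (431)*n3 + (666)*n4 + (160)*n5 + (248)*n6 + (102)*n7 + (120)*n8 + (248)*n9 + (32)*n10 + (126)*n11 + (188)*n12 + (469)*n13 + (113)*n14 + (186)*n15) * ((400)*n0 + (160)*n1 + (668)*n2 + (431)*n3 + (666)*n4 + (160)*n5 + (248)*n6 + (102)*n7 + (120)*n8 + (248)*n9 + (32)*n10 + (126)*n11 + (188)*n12 + (469)*n13 + (113)*n14 + (186)*n15)) + (1/8400) * (cnj ((1680)*n1 + (869)*n2 + (2418)*n3 + (1968)*n4 + (1280)*n5 + (64)*n6 + (961)*n7 + (-80)*n8 + (744)*n9 + (536)*n10 + (673)*n11 + (229)*n12 + (1387)*n13 + (649)*n14 + (528)*n15) * ((1680)*n1 + (869)*n2 + (2418)*n3 + (1968)*n4 + (1280)*n5 + (64)*n6 + (961)*n7 + (-80)*n8 + (744)*n9 + (536)*n10 + (673)*n11 + (229)*n12 + (1387)*n13 + (649)*n14 + (528)*n15)) + (1/2016717360) * (cnj ((1200427)*n2 + (840138)*n3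 + (306072)*n4 + (40960)*n5 + (401888)*n6 + (213767)*n7 + (-208)*n8 + (-5256)*n9 + (16984)*n10 + (265367)*n11 + (507947)*n12 + (956393)*n13 + (188411)*n14 + (115512)*n15) * ((1200427)*n2 + (840138)*n3 + (306072)*n4 + (40960)*n5 + (401888)*n6 + (213767)*n7 + (-208)*n8 + (-5256)*n9 + (16984)*n10 + (265367)*n11 + (507947)*n12 + (956393)*n13 + (188411)*n14 + (115512)*n15)) + (1/3777269626168189040) * (cnj ((39332562769)*n3 + (7142690678)*n4 + (7882431840)*n5 + (-3559422264)*n6 + (11947778614)*n7 + (-1746359928)*n8 + (77198632)*n9 + (1167128096)*n10 + (10751862718)*n11 + (-6923423680)*n12 + (13154169927)*n13 + (13534445939)*n14 + (2254463798)*n15) * ((39332562769)*n3 + (7142690678)*n4 + (7882431840)*n5 + (-3559422264)*n6 + (11947778614)*n7 + (-1746359928)*n8 + (77198632)*n9 + (1167128096)*n10 + (10751862718)*n11 + (-6923423680)*n12 + (13154169927)*n13 + (13534445939)*n14 + (2254463798)*n15)) + (1/327804479021362074472) * (cnj ((308364491656)*n4 + (55908024096)*n5 + (874837111)*n6 + (-12771696360)*n7 + (6672432344)*n8 + (118447502002)*n9 + (8885161044)*n10 + (-14956754580)*n11 + (-7089719670)*n12 + (223384842278)*n13 + (39987114068)*n14 + (196464097628)*n15) * ((308364491656)*n4 + (55908024096)*n5 + (874837111)*n6 + (-12771696360)*n7 + (6672432344)*n8 + (118447502002)*n9 + (8885161044)*n10 + (-14956754580)*n11 + (-7089719670)*n12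 + (223384842278)*n13 + (39987114068)*n14 + (196464097628)*n15)) + (1/69432992236903343252664512) * (cnj ((48684395474368)*n5 + (1659795651199)*n6 + (-53245515749219)*n7 + (-13262082456936)*n8 + (-63932126923292)*n9 + (-26772503117504)*n10 + (-37406268322880)*n11 + (-1076399517480)*n12 + (-85465755255192)*n13 + (-32781740808040)*n14 + (-50508914225264)*n15) * ((48684395474368)*n5 + (1659795651199)*n6 + (-53245515749219)*n7 + (-13262082456936)*n8 + (-63932126923292)*n9 + (-26772503117504)*n10 + (-37406268322880)*n11 + (-1076399517480)*n12 + (-85465755255192)*n13 + (-32781740808040)*n14 + (-50508914225264)*n15)) + (1/384604401695234738129473683264) * (cnj ((7899952293702123)*n6 + (2892077138532073)*n7 + (2186151106230392)*n8 + (4620332627523204)*n9 + (701432505996064)*n10 + (1700856458842848)*n11 + (4575989949982184)*n12 + (8856004772050392)*n13 + (1795471567840280)*n14 + (2553284596262128)*n15) * ((7899952293702123)*n6 + (2892077138532073)*n7 + (2186151106230392)*n8 + (4620332627523204)*n9 + (701432505996064)*n10 + (1700856458842848)*n11 + (4575989949982184)*n12 + (8856004772050392)*n13 + (1795471567840280)*n14 + (2553284596262128)*n15)) + (1/561262614044900651550267602682015768) * (cnj ((8880791193073749577)*n7 + (-900654107639657632)*n8 + (808982349830741418)*n9 + (1236686191627731604)*n10 + (1686195498376240860)*n11 + (1163386861744726238)*n12 + (3495692269397485074)*n13 + (2090163372577763516)*n14 + (411473204985166708)*n15) * ((8880791193073749577)*n7 + (-900654107639657632)*n8 + (808982349830741418)*n9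 + (1236686191627731604)*n10 + (1686195498376240860)*n11 + (1163386861744726238)*n12 + (3495692269397485074)*n13 + (2090163372577763516)*n14 + (411473204985166708)*n15)) + (1/441588790338821287914676415676864621) * (cnj ((3381234519561626964)*n8 + (1715294572116526636)*n9 + (-1469377167921401740)*n10 + (-1592615923879686749)*n11 + (-205386417288542094)*n12 + (-1424977462003678572)*n13 + (-1484826119507961260)*n14 + (363502886622820700)*n15) * ((3381234519561626964)*n8 + (1715294572116526636)*n9 + (-1469377167921401740)*n10 + (-1592615923879686749)*n11 + (-205386417288542094)*n12 + (-1424977462003678572)*n13 + (-1484826119507961260)*n14 + (363502886622820700)*n15)) + (1/4921366562752101166631077111192307919078) * (cnj ((684938353906681187548)*n9 + (146165524566420379247)*n10 + (7387128396213659965)*n11 + (16825596056273080557)*n12 + (23646815052881346975)*n13 + (-106169081010148600559)*n14 + (57439476885447261386)*n15) * ((684938353906681187548)*n9 + (146165524566420379247)*n10 + (7387128396213659965)*n11 + (16825596056273080557)*n12 + (23646815052881346975)*n13 + (-106169081010148600559)*n14 + (57439476885447261386)*n15)) + (1/2220890296945776648218791295959661498062378) * (cnj ((6484934839109213782547)*n10 + (-320189850463067734617)*n11 + (-1406134869537505777253)*n12 + (-2208831748028386350403)*n13 + (132654465657800359967)*n14 + (-377156639065894905582)*n15) * ((6484934839109213782547)*n10 + (-320189850463067734617)*n11 + (-1406134869537505777253)*n12 + (-2208831748028386350403)*n13 + (132654465657800359967)*n14 + (-377156639065894905582)*n15)) + (1/1751302538903780826931708533592106008031088311) * (cnj ((270057075722960378721613)*n11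 + (62894842648348892149120)*n12 + (251876983023204109377066)*n13 + (89868336805096639994298)*n14 + (-52618467557673334083196)*n15) * ((270057075722960378721613)*n11 + (62894842648348892149120)*n12 + (251876983023204109377066)*n13 + (89868336805096639994298)*n14 + (-52618467557673334083196)*n15)) + (4/445660971421690678562165462183505879176000897261) * (cnj ((1650247342079918606641697)*n12 + (3017075157491699120124611)*n13 + (387564327030149771943393)*n14 + (478147421293073184694666)*n15) * ((1650247342079918606641697)*n12 + (3017075157491699120124611)*n13 + (387564327030149771943393)*n14 + (478147421293073184694666)*n15)) + (2/4234729308114878238091668276819109810969802796221) * (cnj ((10264471755555289766829172)*n13 + (2130878935282146310849406)*n14 + (2028542040614031177038607)*n15) * ((10264471755555289766829172)*n13 + (2130878935282146310849406)*n14 + (2028542040614031177038607)*n15)) + (2/32859298426841295703840064276871570336431027497587) * (cnj ((25610123314184065015932318)*n14 + (-7694690825675608915176095)*n15) * ((25610123314184065015932318)*n14 + (-7694690825675608915176095)*n15)) + (133217818171138177023176272/12805061657092032507966159) * (cnj (n15) * (n15))"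
  unfolding QF1_def by (simp only: complex_cnj_add complex_cnj_mult complex_cnj_minus complex_cnj_numeral complex_cnj_one) algebra

lemma psdr1:
  "QF1 (cnj n0) (cnj n1) (cnj n2) (cnj n3) (cnj n4) (cnj n5) (cnj n6) (cnj n7) (cnj n8) (cnj n9) (cnj n10) (cnj n11) (cnj n12) (cnj n13) (cnj n14) (cnj n15) n0 n1 n2 n3 n4 n5 n6 n7 n8 n9 n10 n11 n12 n13 n14 n15 = complex_of_real (rk1 n0 n1 n2 n3 n4 n5 n6 n7 n8 n9 n10 n11 n12 n13 n14 n15)"
  unfolding psd1 rk1_def cnj_self by simp

lemma lastzero1: "(1/400) * a0 + (1/8400) * a1 + (1/2016717360) * a2 + (1/3777269626168189040) * a3 + (1/327804479021362074472) * a4 + (1/69432992236903343252664512) * a5 + (1/384604401695234738129473683264) * a6 + (1/561262614044900651550267602682015768) * a7 + (1/441588790338821287914676415676864621) * a8 + (1/4921366562752101166631077111192307919078) * a9 + (1/2220890296945776648218791295959661498062378) * a10 + (1/1751302538903780826931708533592106008031088311) * a11 + (4/445660971421690678562165462183505879176000897261) * a12 + (2/4234729308114878238091668276819109810969802796221) * a13 + (2/32859298426841295703840064276871570336431027497587) * a14 + (133217818171138177023176272/12805061657092032507966159) * a15 = 0 \<Longrightarrow> 0 \<le> (a0::real) \<Longrightarrow> 0 \<le> (a1::real) \<Longrightarrow> 0 \<le> (a2::real) \<Longrightarrow> 0 \<le> (a3::real) \<Longrightarrow> 0 \<le> (a4::real) \<Longrightarrow> 0 \<le> (a5::real) \<Longrightarrow>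 0 \<le> (a6::real) \<Longrightarrow> 0 \<le> (a7::real) \<Longrightarrow> 0 \<le> (a8::real) \<Longrightarrow> 0 \<le> (a9::real) \<Longrightarrow> 0 \<le> (a10::real) \<Longrightarrow> 0 \<le> (a11::real) \<Longrightarrow> 0 \<le> (a12::real) \<Longrightarrow> 0 \<le> (a13::real) \<Longrightarrow> 0 \<le> (a14::real) \<Longrightarrow> 0 \<le> (a15::real) \<Longrightarrow> a15 = 0"
  by linarith

lemma rk1_nonneg: "0 \<le> rk1 n0 n1 n2 n3 n4 n5 n6 n7 n8 n9 n10 n11 n12 n13 n14 n15"
  unfolding rk1_def by simp

definition rk2 :: "complex \<Rightarrow> complex \<Rightarrow> complex \<Rightarrow> complex \<Rightarrow> complex \<Rightarrow> complex \<Rightarrow> complex \<Rightarrow> complex \<Rightarrow> complex \<Rightarrow> complex \<Rightarrow> complex \<Rightarrow> complex \<Rightarrow> complex \<Rightarrow> complex \<Rightarrow> complex \<Rightarrow> complex \<Rightarrow> real" where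
  "rk2 n0 n1 n2 n3 n4 n5 n6 n7 n8 n9 n10 n11 n12 n13 n14 n15 = (1/320) * (cmod ((320)*n0 + (640)*n1 + (640)*n2 + (160)*n3 + (424)*n4 + (160)*n5 + (160)*n6 + (160)*n7 + (160)*n8 + (160)*n9 + (144)*n10 + (422)*n11 + (137)*n12 + (112)*n13 + (56)*n14 + (104)*n15))^2 + (1/632) * (cmod ((632)*n1 + (200)*n2 + (120)*n3 + (648)*n4 + (112)*n5 + (216)*n6 + (114)*n7 + (276)*n8 + (90)*n9 + (252)*n10 + (615)*n11 + (94)*n12 + (200)*n13 + (40)*n14 + (216)*n15))^2 + (1/3599240) * (cmod ((45560)*n2 + (23544)*n3 + (34992)*n4 + (22480)*n5 + (2816)*n6 + (14767)*n7 + (605)*n8 + (19159)*n9 + (573)*n10 + (32894)*n11 + (18427)*n12 + (13960)*n13 + (7216)*n14 + (12296)*n15))^2 + (1/18578274560) * (cmod ((1631104)*n3 + (1094192)*n4 + (816480)*n5 + (-312464)*n6 + (-253338)*n7 + (-186370)*n8 + (18054)*n9 + (-40962)*n10 + (-716936)*n11 + (-351793)*n12 + (623120)*n13 + (423736)*n14 + (74656)*n15))^2 + (1/300508696363520) * (cmod ((294778208)*n4 + (47429600)*n5 + (-70792640)*n6 + (-50493830)*n7 + (-59018110)*n8 + (-60765350)*n9 + (-28888862)*n10 + (37421684)*n11 + (-20728981)*n12 + (136724624)*n13 + (-10524168)*n14 + (159840368)*n15))^2 + (1/790270808214624768) * (cmod ((5361799392)*n5 + (-878597104)*n6 + (-4470384414)*n7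 + (-469372486)*n8 + (-5720866958)*n9 + (-1455804710)*n10 + (-9997961956)*n11 + (-3171310845)*n12 + (-7015459504)*n13 + (-2523211272)*n14 + (-5244862512)*n15))^2 + (1/1755548386218211815936) * (cmod ((327417767408)*n6 + (44816392662)*n7 + (255425082878)*n8 + (74417818726)*n9 + (173251212574)*n10 + (400615040204)*n11 + (35552079525)*n12 + (212397211568)*n13 + (13542115464)*n14 + (137455591056)*n15))^2 + (1/1110911893654810843349122560) * (cmod ((212059332952770)*n7 + (31951676132522)*n8 + (109669567635298)*n9 + (32074894364298)*n10 + (88203062955940)*n11 + (61893209826167)*n12 + (68167509896528)*n13 + (44894463228120)*n14 + (-56119705963216)*n15))^2 + (1/759362757122501900928955538085) * (cmod ((7161795206548421)*n8 + (884636730661609)*n9 + (2626780023166989)*n10 + (4695984856868350)*n11 + (733243664500796)*n12 + (1101031647771704)*n13 + (714891920332890)*n14 + (2358565800166337)*n15))^2 + (1/447976683730077923790348162043907584) * (cmod ((7818861591442679488)*n9 + (180625938664484144)*n10 + (1779039466485581182)*n11 + (1188694852599933193)*n12 + (1400777324469505104)*n13 + (1217389120508671688)*n14 + (1090546373923771040)*n15))^2 + (1/640311869575429195597205093724615275008) * (cmod ((163786469957778982832)*n10 + (141507957982533216526)*n11 + (-27312585047374238127)*n12 + (7514408366024144336)*n13 + (-18062475901860895480)*n14 + (40819460077495911072)*n15))^2 + (1/1259422473274000236745906748928770443787600) * (cmod ((15378834083165175312350)*n11 + (2955594357376939571039)*n12 + (2984924081627767881200)*n13 + (253857854315286714944)*n14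 + (3444270423453028728424)*n15))^2 + (1/8532289969789663112822772011073357191207422150) * (cmod ((554807336086013656344269)*n12 + (5326445526655801671000)*n13 + (34478082666851316676224)*n14 + (9515918174873348503279)*n15))^2 + (1/1057267522182941111385298785275899175366083945569) * (cmod ((7622592229162805116710804)*n13 + (2535881373060482607547330)*n14 + (2372064160077951821414537)*n15))^2 + (4/20363023581417773011407225265640225396674354295529) * (cmod ((10685616110231969627202229)*n14 + (657047124820216372990013)*n15))^2 + (197166050070752130307145949/21371232220463939254404458) * (cmod (n15))^2"

lemma psd2:
  fixes n0 n1 n2 n3 n4 n5 n6 n7 n8 n9 n10 n11 n12 n13 n14 n15 :: complex
  shows "QF2 (cnj n0) (cnj n1) (cnj n2) (cnj n3) (cnj n4) (cnj n5) (cnj n6) (cnj n7) (cnj n8) (cnj n9) (cnj n10) (cnj n11) (cnj n12) (cnj n13) (cnj n14) (cnj n15) n0 n1 n2 n3 n4 n5 n6 n7 n8 n9 n10 n11 n12 n13 n14 n15 = (1/320) * (cnj ((320)*n0 + (640)*n1 + (640)*n2 + (160)*n3 + (424)*n4 + (160)*n5 + (160)*n6 + (160)*n7 + (160)*n8 + (160)*n9 + (144)*n10 + (422)*n11 + (137)*n12 + (112)*n13 + (56)*n14 + (104)*n15) * ((320)*n0 + (640)*n1 + (640)*n2 + (160)*n3 + (424)*n4 + (160)*n5 + (160)*n6 + (160)*n7 + (160)*n8 + (160)*n9 + (144)*n10 + (422)*n11 + (137)*n12 + (112)*n13 + (56)*n14 + (104)*n15)) + (1/632) * (cnj ((632)*n1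 + (200)*n2 + (120)*n3 + (648)*n4 + (112)*n5 + (216)*n6 + (114)*n7 + (276)*n8 + (90)*n9 + (252)*n10 + (615)*n11 + (94)*n12 + (200)*n13 + (40)*n14 + (216)*n15) * ((632)*n1 + (200)*n2 + (120)*n3 + (648)*n4 + (112)*n5 + (216)*n6 + (114)*n7 + (276)*n8 + (90)*n9 + (252)*n10 + (615)*n11 + (94)*n12 + (200)*n13 + (40)*n14 + (216)*n15)) + (1/3599240) * (cnj ((45560)*n2 + (23544)*n3 + (34992)*n4 + (22480)*n5 + (2816)*n6 + (14767)*n7 + (605)*n8 + (19159)*n9 + (573)*n10 + (32894)*n11 + (18427)*n12 + (13960)*n13 + (7216)*n14 + (12296)*n15) * ((45560)*n2 + (23544)*n3 + (34992)*n4 + (22480)*n5 + (2816)*n6 + (14767)*n7 + (605)*n8 + (19159)*n9 + (573)*n10 + (32894)*n11 + (18427)*n12 + (13960)*n13 + (7216)*n14 + (12296)*n15)) + (1/18578274560) * (cnj ((1631104)*n3 + (1094192)*n4 + (816480)*n5 + (-312464)*n6 + (-253338)*n7 + (-186370)*n8 + (18054)*n9 + (-40962)*n10 + (-716936)*n11 + (-351793)*n12 + (623120)*n13 + (423736)*n14 + (74656)*n15) * ((1631104)*n3 + (1094192)*n4 + (816480)*n5 + (-312464)*n6 + (-253338)*n7 + (-186370)*n8 + (18054)*n9 + (-40962)*n10 + (-716936)*n11 + (-351793)*n12 + (623120)*n13 + (423736)*n14 + (74656)*n15)) + (1/300508696363520) * (cnj ((294778208)*n4 + (47429600)*n5 +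 (-70792640)*n6 + (-50493830)*n7 + (-59018110)*n8 + (-60765350)*n9 + (-28888862)*n10 + (37421684)*n11 + (-20728981)*n12 + (136724624)*n13 + (-10524168)*n14 + (159840368)*n15) * ((294778208)*n4 + (47429600)*n5 + (-70792640)*n6 + (-50493830)*n7 + (-59018110)*n8 + (-60765350)*n9 + (-28888862)*n10 + (37421684)*n11 + (-20728981)*n12 + (136724624)*n13 + (-10524168)*n14 + (159840368)*n15)) + (1/790270808214624768) * (cnj ((5361799392)*n5 + (-878597104)*n6 + (-4470384414)*n7 + (-469372486)*n8 + (-5720866958)*n9 + (-1455804710)*n10 + (-9997961956)*n11 + (-3171310845)*n12 + (-7015459504)*n13 + (-2523211272)*n14 + (-5244862512)*n15) * ((5361799392)*n5 + (-878597104)*n6 + (-4470384414)*n7 + (-469372486)*n8 + (-5720866958)*n9 + (-1455804710)*n10 + (-9997961956)*n11 + (-3171310845)*n12 + (-7015459504)*n13 + (-2523211272)*n14 + (-5244862512)*n15)) + (1/1755548386218211815936) * (cnj ((327417767408)*n6 + (44816392662)*n7 + (255425082878)*n8 + (74417818726)*n9 + (173251212574)*n10 + (400615040204)*n11 + (35552079525)*n12 + (212397211568)*n13 + (13542115464)*n14 + (137455591056)*n15) * ((327417767408)*n6 + (44816392662)*n7 + (255425082878)*n8 + (74417818726)*n9 + (173251212574)*n10 + (400615040204)*n11 + (35552079525)*n12 + (212397211568)*n13 + (13542115464)*n14 + (137455591056)*n15)) + (1/1110911893654810843349122560) * (cnj ((212059332952770)*n7 + (31951676132522)*n8 + (109669567635298)*n9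 + (32074894364298)*n10 + (88203062955940)*n11 + (61893209826167)*n12 + (68167509896528)*n13 + (44894463228120)*n14 + (-56119705963216)*n15) * ((212059332952770)*n7 + (31951676132522)*n8 + (109669567635298)*n9 + (32074894364298)*n10 + (88203062955940)*n11 + (61893209826167)*n12 + (68167509896528)*n13 + (44894463228120)*n14 + (-56119705963216)*n15)) + (1/759362757122501900928955538085) * (cnj ((7161795206548421)*n8 + (884636730661609)*n9 + (2626780023166989)*n10 + (4695984856868350)*n11 + (733243664500796)*n12 + (1101031647771704)*n13 + (714891920332890)*n14 + (2358565800166337)*n15) * ((7161795206548421)*n8 + (884636730661609)*n9 + (2626780023166989)*n10 + (4695984856868350)*n11 + (733243664500796)*n12 + (1101031647771704)*n13 + (714891920332890)*n14 + (2358565800166337)*n15)) + (1/447976683730077923790348162043907584) * (cnj ((7818861591442679488)*n9 + (180625938664484144)*n10 + (1779039466485581182)*n11 + (1188694852599933193)*n12 + (1400777324469505104)*n13 + (1217389120508671688)*n14 + (1090546373923771040)*n15) * ((7818861591442679488)*n9 + (180625938664484144)*n10 + (1779039466485581182)*n11 + (1188694852599933193)*n12 + (1400777324469505104)*n13 + (1217389120508671688)*n14 + (1090546373923771040)*n15)) + (1/640311869575429195597205093724615275008) * (cnj ((163786469957778982832)*n10 + (141507957982533216526)*n11 + (-27312585047374238127)*n12 + (7514408366024144336)*n13 + (-18062475901860895480)*n14 + (40819460077495911072)*n15) * ((163786469957778982832)*n10 + (141507957982533216526)*n11 + (-27312585047374238127)*n12 + (7514408366024144336)*n13 + (-18062475901860895480)*n14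 + (40819460077495911072)*n15)) + (1/1259422473274000236745906748928770443787600) * (cnj ((15378834083165175312350)*n11 + (2955594357376939571039)*n12 + (2984924081627767881200)*n13 + (253857854315286714944)*n14 + (3444270423453028728424)*n15) * ((15378834083165175312350)*n11 + (2955594357376939571039)*n12 + (2984924081627767881200)*n13 + (253857854315286714944)*n14 + (3444270423453028728424)*n15)) + (1/8532289969789663112822772011073357191207422150) * (cnj ((554807336086013656344269)*n12 + (5326445526655801671000)*n13 + (34478082666851316676224)*n14 + (9515918174873348503279)*n15) * ((554807336086013656344269)*n12 + (5326445526655801671000)*n13 + (34478082666851316676224)*n14 + (9515918174873348503279)*n15)) + (1/1057267522182941111385298785275899175366083945569) * (cnj ((7622592229162805116710804)*n13 + (2535881373060482607547330)*n14 + (2372064160077951821414537)*n15) * ((7622592229162805116710804)*n13 + (2535881373060482607547330)*n14 + (2372064160077951821414537)*n15)) + (4/20363023581417773011407225265640225396674354295529) * (cnj ((10685616110231969627202229)*n14 + (657047124820216372990013)*n15) * ((10685616110231969627202229)*n14 + (657047124820216372990013)*n15)) + (197166050070752130307145949/21371232220463939254404458) * (cnj (n15) * (n15))"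
  unfolding QF2_def by (simp only: complex_cnj_add complex_cnj_mult complex_cnj_minus complex_cnj_numeral complex_cnj_one) algebra

lemma psdr2:
  "QF2 (cnj n0) (cnj n1) (cnj n2) (cnj n3) (cnj n4) (cnj n5) (cnj n6) (cnj n7) (cnj n8) (cnj n9) (cnj n10) (cnj n11) (cnj n12) (cnj n13) (cnj n14) (cnj n15) n0 n1 n2 n3 n4 n5 n6 n7 n8 n9 n10 n11 n12 n13 n14 n15 = complex_of_real (rk2 n0 n1 n2 n3 n4 n5 n6 n7 n8 n9 n10 n11 n12 n13 n14 n15)"
  unfolding psd2 rk2_def cnj_self by simp

lemma lastzero2: "(1/320) * a0 + (1/632) * a1 + (1/3599240) * a2 + (1/18578274560) * a3 + (1/300508696363520) * a4 + (1/790270808214624768) * a5 + (1/1755548386218211815936) * a6 + (1/1110911893654810843349122560) * a7 + (1/759362757122501900928955538085) * a8 + (1/447976683730077923790348162043907584) * a9 + (1/640311869575429195597205093724615275008) * a10 + (1/1259422473274000236745906748928770443787600) * a11 + (1/8532289969789663112822772011073357191207422150) * a12 + (1/1057267522182941111385298785275899175366083945569) * a13 + (4/20363023581417773011407225265640225396674354295529) * a14 + (197166050070752130307145949/21371232220463939254404458) * a15 = 0 \<Longrightarrow> 0 \<le> (a0::real) \<Longrightarrow> 0 \<le> (a1::real) \<Longrightarrow> 0 \<le> (a2::real) \<Longrightarrow> 0 \<le> (a3::real) \<Longrightarrow> 0 \<le> (a4::real) \<Longrightarrow> 0 \<le> (a5::real) \<Longrightarrow> 0 \<le> (a6::real) \<Longrightarrow>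 0 \<le> (a7::real) \<Longrightarrow> 0 \<le> (a8::real) \<Longrightarrow> 0 \<le> (a9::real) \<Longrightarrow> 0 \<le> (a10::real) \<Longrightarrow> 0 \<le> (a11::real) \<Longrightarrow> 0 \<le> (a12::real) \<Longrightarrow> 0 \<le> (a13::real) \<Longrightarrow> 0 \<le> (a14::real) \<Longrightarrow> 0 \<le> (a15::real) \<Longrightarrow> a15 = 0"
  by linarith

lemma rk2_nonneg: "0 \<le> rk2 n0 n1 n2 n3 n4 n5 n6 n7 n8 n9 n10 n11 n12 n13 n14 n15"
  unfolding rk2_def by simp

definition rk3 :: "complex \<Rightarrow> complex \<Rightarrow> complex \<Rightarrow> complex \<Rightarrow> complex \<Rightarrow> complex \<Rightarrow> complex \<Rightarrow> complex \<Rightarrow> complex \<Rightarrow> complex \<Rightarrow> complex \<Rightarrow> complex \<Rightarrow> complex \<Rightarrow> complex \<Rightarrow> complex \<Rightarrow> complex \<Rightarrow> real" where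
  "rk3 n0 n1 n2 n3 n4 n5 n6 n7 n8 n9 n10 n11 n12 n13 n14 n15 = (1/480) * (cmod ((960)*n0 + (328)*n1 + (748)*n2 + (320)*n3 + (748)*n4 + (212)*n5 + (104)*n6 + (212)*n7 + (320)*n8 + (328)*n9 + (752)*n10 + (219)*n11 + (204)*n12 + (208)*n13 + (212)*n14 + (192)*n15))^2 + (1/633120) * (cmod ((10552)*n1 + (8572)*n2 + (-3520)*n3 + (-4748)*n4 + (908)*n5 + (2936)*n6 + (2228)*n7 + (-2560)*n8 + (472)*n9 + (-2392)*n10 + (4461)*n11 + (1716)*n12 + (-1808)*n13 + (-1972)*n14 + (-672)*n15))^2 + (1/17990737920) * (cmod ((3409920)*n2 + (-100288)*n3 + (2039972)*n4 + (1568764)*n5 + (32616)*n6 + (925768)*n7 + (-211072)*n8 + (-282392)*n9 + (1669956)*n10 + (1067473)*n11 + (1091428)*n12 + (445008)*n13 + (592668)*n14 + (706448)*n15))^2 + (1/3930532945920) * (cmod ((18442816)*n3 + (26918596)*n4 + (6917852)*n5 + (-1028952)*n6 + (-4216696)*n7 + (-14650496)*n8 + (-12279256)*n9 + (-15626652)*n10 + (-4101991)*n11 + (-79996)*n12 + (2932944)*n13 + (2345724)*n14 + (3452944)*n15))^2 + (1/6273254019455808) * (cmod ((1360584852)*n4 + (420417388)*n5 + (70543832)*n6 + (-100294864)*n7 + (177067744)*n8 + (186836712)*n9 + (810832916)*n10 + (33342893)*n11 + (17334492)*n12 + (589071728)*n13 + (772647884)*n14 + (608651712)*n15))^2 + (1/1386072971714457642)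 * (cmod ((8149865668)*n5 + (16192052)*n6 + (-5342193100)*n7 + (-227565836)*n8 + (29095008)*n9 + (-13122316708)*n10 + (-5309634079)*n11 + (-4890069666)*n12 + (-5564423134)*n13 + (-6529836538)*n14 + (-5494203150)*n15))^2 + (1/44345355876452138277) * (cmod ((43529901162)*n6 + (22557470911)*n7 + (17417461240)*n8 + (42726274816)*n9 + (44901906814)*n10 + (49450085430)*n11 + (26186408377)*n12 + (8882827396)*n13 + (18478650838)*n14 + (10553335304)*n15))^2 + (2/12481501707566330497311) * (cmod ((573467955331)*n7 + (173180351326)*n8 + (132720057814)*n9 + (534700948009)*n10 + (252041115426)*n11 + (171095755948)*n12 + (-193750333058)*n13 + (77387513935)*n14 + (131718307619)*n15))^2 + (1/1929168001877319346052) * (cmod ((208570356904)*n8 + (262928052972)*n9 + (303624790614)*n10 + (120638868791)*n11 + (102855247408)*n12 + (134329136802)*n13 + (-54538551100)*n14 + (5174604616)*n15))^2 + (1/182944415858460518300164) * (cmod ((2942647350044)*n9 + (88381527446)*n10 + (-209097270683)*n11 + (56051426252)*n12 + (-299107737026)*n13 + (-103008507408)*n14 + (216993587252)*n15))^2 + (4/386985576433696727967493) * (cmod ((4167834096953)*n10 + (121428390437)*n11 + (355847860421)*n12 + (915649587376)*n13 + (657728992409)*n14 + (632290352359)*n15))^2 + (1/79063681689477399131530292769226) * (cmod ((92087225911078507)*n11 + (7075712936169292)*n12 + (1783607022246328)*n13 + (-5093332555585198)*n14 + (-2933693685768202)*n15))^2 + (4/79579825498677268617155277770364251) * (cmod ((864178768676573393)*n12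 + (40813185927379252)*n13 + (48527835358985566)*n14 + (94856184764772649)*n15))^2 + (4/5120650422373098156479168980551594655) * (cmod ((5925452704901556335)*n13 + (5065118712181084601)*n14 + (2479549273388202670)*n15))^2 + (2/669850865901595446624142412515529488235) * (cmod ((113046361056513427141)*n14 + (19653067354654642585)*n15))^2 + (3919228462252710692640/113046361056513427141) * (cmod (n15))^2"

lemma psd3:
  fixes n0 n1 n2 n3 n4 n5 n6 n7 n8 n9 n10 n11 n12 n13 n14 n15 :: complex
  shows "QF3 (cnj n0) (cnj n1) (cnj n2) (cnj n3) (cnj n4) (cnj n5) (cnj n6) (cnj n7) (cnj n8) (cnj n9) (cnj n10) (cnj n11) (cnj n12) (cnj n13) (cnj n14) (cnj n15) n0 n1 n2 n3 n4 n5 n6 n7 n8 n9 n10 n11 n12 n13 n14 n15 = (1/480) * (cnj ((960)*n0 + (328)*n1 + (748)*n2 + (320)*n3 + (748)*n4 + (212)*n5 + (104)*n6 + (212)*n7 + (320)*n8 + (328)*n9 + (752)*n10 + (219)*n11 + (204)*n12 + (208)*n13 + (212)*n14 + (192)*n15) * ((960)*n0 + (328)*n1 + (748)*n2 + (320)*n3 + (748)*n4 + (212)*n5 + (104)*n6 + (212)*n7 + (320)*n8 + (328)*n9 + (752)*n10 + (219)*n11 + (204)*n12 + (208)*n13 + (212)*n14 + (192)*n15)) + (1/633120) * (cnj ((10552)*n1 + (8572)*n2 + (-3520)*n3 + (-4748)*n4 + (908)*n5 + (2936)*n6 + (2228)*n7 + (-2560)*n8 + (472)*n9 + (-2392)*n10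 + (4461)*n11 + (1716)*n12 + (-1808)*n13 + (-1972)*n14 + (-672)*n15) * ((10552)*n1 + (8572)*n2 + (-3520)*n3 + (-4748)*n4 + (908)*n5 + (2936)*n6 + (2228)*n7 + (-2560)*n8 + (472)*n9 + (-2392)*n10 + (4461)*n11 + (1716)*n12 + (-1808)*n13 + (-1972)*n14 + (-672)*n15)) + (1/17990737920) * (cnj ((3409920)*n2 + (-100288)*n3 + (2039972)*n4 + (1568764)*n5 + (32616)*n6 + (925768)*n7 + (-211072)*n8 + (-282392)*n9 + (1669956)*n10 + (1067473)*n11 + (1091428)*n12 + (445008)*n13 + (592668)*n14 + (706448)*n15) * ((3409920)*n2 + (-100288)*n3 + (2039972)*n4 + (1568764)*n5 + (32616)*n6 + (925768)*n7 + (-211072)*n8 + (-282392)*n9 + (1669956)*n10 + (1067473)*n11 + (1091428)*n12 + (445008)*n13 + (592668)*n14 + (706448)*n15)) + (1/3930532945920) * (cnj ((18442816)*n3 + (26918596)*n4 + (6917852)*n5 + (-1028952)*n6 + (-4216696)*n7 + (-14650496)*n8 + (-12279256)*n9 + (-15626652)*n10 + (-4101991)*n11 + (-79996)*n12 + (2932944)*n13 + (2345724)*n14 + (3452944)*n15) * ((18442816)*n3 + (26918596)*n4 + (6917852)*n5 + (-1028952)*n6 + (-4216696)*n7 + (-14650496)*n8 + (-12279256)*n9 + (-15626652)*n10 + (-4101991)*n11 + (-79996)*n12 + (2932944)*n13 + (2345724)*n14 + (3452944)*n15)) + (1/6273254019455808) * (cnj ((1360584852)*n4 + (420417388)*n5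 + (70543832)*n6 + (-100294864)*n7 + (177067744)*n8 + (186836712)*n9 + (810832916)*n10 + (33342893)*n11 + (17334492)*n12 + (589071728)*n13 + (772647884)*n14 + (608651712)*n15) * ((1360584852)*n4 + (420417388)*n5 + (70543832)*n6 + (-100294864)*n7 + (177067744)*n8 + (186836712)*n9 + (810832916)*n10 + (33342893)*n11 + (17334492)*n12 + (589071728)*n13 + (772647884)*n14 + (608651712)*n15)) + (1/1386072971714457642) * (cnj ((8149865668)*n5 + (16192052)*n6 + (-5342193100)*n7 + (-227565836)*n8 + (29095008)*n9 + (-13122316708)*n10 + (-5309634079)*n11 + (-4890069666)*n12 + (-5564423134)*n13 + (-6529836538)*n14 + (-5494203150)*n15) * ((8149865668)*n5 + (16192052)*n6 + (-5342193100)*n7 + (-227565836)*n8 + (29095008)*n9 + (-13122316708)*n10 + (-5309634079)*n11 + (-4890069666)*n12 + (-5564423134)*n13 + (-6529836538)*n14 + (-5494203150)*n15)) + (1/44345355876452138277) * (cnj ((43529901162)*n6 + (22557470911)*n7 + (17417461240)*n8 + (42726274816)*n9 + (44901906814)*n10 + (49450085430)*n11 + (26186408377)*n12 + (8882827396)*n13 + (18478650838)*n14 + (10553335304)*n15) * ((43529901162)*n6 + (22557470911)*n7 + (17417461240)*n8 + (42726274816)*n9 + (44901906814)*n10 + (49450085430)*n11 + (26186408377)*n12 + (8882827396)*n13 + (18478650838)*n14 + (10553335304)*n15)) + (2/12481501707566330497311) * (cnj ((573467955331)*n7 + (173180351326)*n8 + (132720057814)*n9 + (534700948009)*n10 + (252041115426)*n11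 + (171095755948)*n12 + (-193750333058)*n13 + (77387513935)*n14 + (131718307619)*n15) * ((573467955331)*n7 + (173180351326)*n8 + (132720057814)*n9 + (534700948009)*n10 + (252041115426)*n11 + (171095755948)*n12 + (-193750333058)*n13 + (77387513935)*n14 + (131718307619)*n15)) + (1/1929168001877319346052) * (cnj ((208570356904)*n8 + (262928052972)*n9 + (303624790614)*n10 + (120638868791)*n11 + (102855247408)*n12 + (134329136802)*n13 + (-54538551100)*n14 + (5174604616)*n15) * ((208570356904)*n8 + (262928052972)*n9 + (303624790614)*n10 + (120638868791)*n11 + (102855247408)*n12 + (134329136802)*n13 + (-54538551100)*n14 + (5174604616)*n15)) + (1/182944415858460518300164) * (cnj ((2942647350044)*n9 + (88381527446)*n10 + (-209097270683)*n11 + (56051426252)*n12 + (-299107737026)*n13 + (-103008507408)*n14 + (216993587252)*n15) * ((2942647350044)*n9 + (88381527446)*n10 + (-209097270683)*n11 + (56051426252)*n12 + (-299107737026)*n13 + (-103008507408)*n14 + (216993587252)*n15)) + (4/386985576433696727967493) * (cnj ((4167834096953)*n10 + (121428390437)*n11 + (355847860421)*n12 + (915649587376)*n13 + (657728992409)*n14 + (632290352359)*n15) * ((4167834096953)*n10 + (121428390437)*n11 + (355847860421)*n12 + (915649587376)*n13 + (657728992409)*n14 + (632290352359)*n15)) + (1/79063681689477399131530292769226) * (cnj ((92087225911078507)*n11 + (7075712936169292)*n12 + (1783607022246328)*n13 + (-5093332555585198)*n14 + (-2933693685768202)*n15) * ((92087225911078507)*n11 + (7075712936169292)*n12 + (1783607022246328)*n13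 + (-5093332555585198)*n14 + (-2933693685768202)*n15)) + (4/79579825498677268617155277770364251) * (cnj ((864178768676573393)*n12 + (40813185927379252)*n13 + (48527835358985566)*n14 + (94856184764772649)*n15) * ((864178768676573393)*n12 + (40813185927379252)*n13 + (48527835358985566)*n14 + (94856184764772649)*n15)) + (4/5120650422373098156479168980551594655) * (cnj ((5925452704901556335)*n13 + (5065118712181084601)*n14 + (2479549273388202670)*n15) * ((5925452704901556335)*n13 + (5065118712181084601)*n14 + (2479549273388202670)*n15)) + (2/669850865901595446624142412515529488235) * (cnj ((113046361056513427141)*n14 + (19653067354654642585)*n15) * ((113046361056513427141)*n14 + (19653067354654642585)*n15)) + (3919228462252710692640/113046361056513427141) * (cnj (n15) * (n15))"
  unfolding QF3_def by (simp only: complex_cnj_add complex_cnj_mult complex_cnj_minus complex_cnj_numeral complex_cnj_one) algebra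

lemma psdr3:
  "QF3 (cnj n0) (cnj n1) (cnj n2) (cnj n3) (cnj n4) (cnj n5) (cnj n6) (cnj n7) (cnj n8) (cnj n9) (cnj n10) (cnj n11) (cnj n12) (cnj n13) (cnj n14) (cnj n15) n0 n1 n2 n3 n4 n5 n6 n7 n8 n9 n10 n11 n12 n13 n14 n15 = complex_of_real (rk3 n0 n1 n2 n3 n4 n5 n6 n7 n8 n9 n10 n11 n12 n13 n14 n15)"
  unfolding psd3 rk3_def cnj_self by simp

lemma lastzero3: "(1/480) * a0 + (1/633120) * a1 + (1/17990737920) * a2 + (1/3930532945920) * a3 + (1/6273254019455808) * a4 + (1/1386072971714457642) * a5 + (1/44345355876452138277) * a6 + (2/12481501707566330497311) * a7 + (1/1929168001877319346052) * a8 + (1/182944415858460518300164) * a9 + (4/386985576433696727967493) * a10 + (1/79063681689477399131530292769226) * a11 + (4/79579825498677268617155277770364251) * a12 + (4/5120650422373098156479168980551594655) * a13 + (2/669850865901595446624142412515529488235) * a14 + (3919228462252710692640/113046361056513427141) * a15 = 0 \<Longrightarrow> 0 \<le> (a0::real) \<Longrightarrow> 0 \<le> (a1::real) \<Longrightarrow> 0 \<le> (a2::real) \<Longrightarrow> 0 \<le> (a3::real) \<Longrightarrow> 0 \<le> (a4::real) \<Longrightarrow> 0 \<le> (a5::real) \<Longrightarrow> 0 \<le> (a6::real) \<Longrightarrow> 0 \<le> (a7::real) \<Longrightarrow> 0 \<le> (a8::real) \<Longrightarrow> 0 \<le> (a9::real) \<Longrightarrow> 0 \<le> (a10::real) \<Longrightarrow>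 0 \<le> (a11::real) \<Longrightarrow> 0 \<le> (a12::real) \<Longrightarrow> 0 \<le> (a13::real) \<Longrightarrow> 0 \<le> (a14::real) \<Longrightarrow> 0 \<le> (a15::real) \<Longrightarrow> a15 = 0"
  by linarith

lemma rk3_nonneg: "0 \<le> rk3 n0 n1 n2 n3 n4 n5 n6 n7 n8 n9 n10 n11 n12 n13 n14 n15"
  unfolding rk3_def by simp

definition rk4 :: "complex \<Rightarrow> complex \<Rightarrow> complex \<Rightarrow> complex \<Rightarrow> complex \<Rightarrow> complex \<Rightarrow> complex \<Rightarrow> complex \<Rightarrow> complex \<Rightarrow> complex \<Rightarrow> complex \<Rightarrow> complex \<Rightarrow> complex \<Rightarrow> complex \<Rightarrow> complex \<Rightarrow> complex \<Rightarrow> real" where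
  "rk4 n0 n1 n2 n3 n4 n5 n6 n7 n8 n9 n10 n11 n12 n13 n14 n15 = (1/1920) * (cmod ((1920)*n0 + (1478)*n1 + (664)*n2 + (1506)*n3 + (664)*n4 + (434)*n5 + (430)*n6 + (193)*n7 + (640)*n8 + (1480)*n9 + (695)*n10 + (408)*n11 + (438)*n12 + (184)*n13 + (432)*n14 + (472)*n15))^2 + (1/720919680) * (cmod ((750958)*n1 + (139064)*n2 + (305946)*n3 + (-83656)*n4 + (293674)*n5 + (191030)*n6 + (57053)*n7 + (-65920)*n8 + (286760)*n9 + (-53765)*n10 + (226488)*n11 + (258078)*n12 + (-51496)*n13 + (87792)*n14 + (50552)*n15))^2 + (1/1264820160929) * (cmod ((13474204)*n2 + (-13877834)*n3 + (-5021680)*n4 + (-4387548)*n5 + (-897174)*n6 + (3965880)*n7 + (-2310838)*n8 + (-9682550)*n9 + (1691251)*n10 + (-825030)*n11 + (2885768)*n12 + (-2787918)*n13 + (-5100404)*n14 + (-6475578)*n15))^2 + (1/1295340533249686) * (cmod ((769078772)*n3 + (208140076)*n4 + (213583069)*n5 + (-101385088)*n6 + (-18665724)*n7 + (-110117271)*n8 + (153589547)*n9 + (-13081713)*n10 + (8092916)*n11 + (-25966443)*n12 + (79059026)*n13 + (350211448)*n14 + (325520582)*n15))^2 + (1/991444438122593070) * (cmod ((10313059980)*n4 + (-745296069)*n5 + (-174213760)*n6 + (-901789658)*n7 + (-3505397753)*n8 + (-6698599311)*n9 + (1751927893)*n10 + (827319712)*n11 + (-182443725)*n12 + (2558989362)*n13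 + (-3050917308)*n14 + (443864746)*n15))^2 + (1/37868129093521365995) * (cmod ((44062339403)*n5 + (-27108025020)*n6 + (-2329094069)*n7 + (3173056021)*n8 + (-76750151213)*n9 + (-11908557766)*n10 + (-24116784544)*n11 + (-25767304175)*n12 + (-1200886444)*n13 + (-43954360774)*n14 + (-37030545502)*n15))^2 + (1/1137010580782697281994952) * (cmod ((8601529833928)*n6 + (2800315717385)*n7 + (3374969367224)*n8 + (9727643751438)*n9 + (4567654253306)*n10 + (4169111186990)*n11 + (7277875174476)*n12 + (1088884025436)*n13 + (-29256532680)*n14 + (1500425532620)*n15))^2 + (1/2627988404219133193988866680) * (cmod ((305525697748935)*n7 + (131062048039352)*n8 + (226538106751178)*n9 + (331270424142042)*n10 + (109825520033178)*n11 + (227509888122172)*n12 + (-77136068921036)*n13 + (45242189918456)*n14 + (68634948783060)*n15))^2 + (1/5399328838602755995686774400620) * (cmod ((17672257614937652)*n8 + (33861165349167218)*n9 + (19097781432972717)*n10 + (5800116968765898)*n11 + (7707864501401332)*n12 + (7744559689318084)*n13 + (10756732027440596)*n14 + (13420624069214400)*n15))^2 + (1/5063029034371921382828349248717044) * (cmod ((572991764231904994)*n9 + (-102039071552564269)*n10 + (135497233721734198)*n11 + (10746787102604328)*n12 + (-39286285492036556)*n13 + (94557865724959204)*n14 + (78787000801243360)*n15))^2 + (1/7671707028176414308674165601971735841) * (cmod ((26777721800104165553)*n10 + (-869373647345819804)*n11 + (1099020720407022374)*n12 + (7548132755828742830)*n13 + (679205224686730632)*n14 + (5693120514421988274)*n15))^2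 + (4/6395175148801841518768958462338393684187) * (cmod ((238824467463731893579)*n11 + (46831232449756656746)*n12 + (-22199622124348136645)*n13 + (-41073030431170486238)*n14 + (-71250733404906742663)*n15))^2 + (4/1485611984479202127205320122508302083454383) * (cmod ((6220518359178623727277)*n12 + (260537238472559443101)*n13 + (1717314509456605286)*n14 + (-190348509281307781707)*n15))^2 + (4/178355545745112063140028446266627897232442007) * (cmod ((28672135575637570337491)*n13 + (6462827961216697146213)*n14 + (27056737929210212387842)*n15))^2 + (4/535522019438604283158820191098355932086689941) * (cmod ((37354874946506045393902)*n14 + (58417686333848664024403)*n15))^2 + (771222066172043361382484/18677437473253022696951) * (cmod (n15))^2"

lemma psd4:
  fixes n0 n1 n2 n3 n4 n5 n6 n7 n8 n9 n10 n11 n12 n13 n14 n15 :: complex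
  shows "QF4 (cnj n0) (cnj n1) (cnj n2) (cnj n3) (cnj n4) (cnj n5) (cnj n6) (cnj n7) (cnj n8) (cnj n9) (cnj n10) (cnj n11) (cnj n12) (cnj n13) (cnj n14) (cnj n15) n0 n1 n2 n3 n4 n5 n6 n7 n8 n9 n10 n11 n12 n13 n14 n15 = (1/1920) * (cnj ((1920)*n0 + (1478)*n1 + (664)*n2 + (1506)*n3 + (664)*n4 + (434)*n5 + (430)*n6 + (193)*n7 + (640)*n8 + (1480)*n9 + (695)*n10 + (408)*n11 + (438)*n12 + (184)*n13 + (432)*n14 + (472)*n15) * ((1920)*n0 + (1478)*n1 + (664)*n2 + (1506)*n3 + (664)*n4 + (434)*n5 + (430)*n6 + (193)*n7 + (640)*n8 + (1480)*n9 + (695)*n10 + (408)*n11 + (438)*n12 + (184)*n13 + (432)*n14 + (472)*n15)) + (1/720919680) * (cnj ((750958)*n1 + (139064)*n2 + (305946)*n3 + (-83656)*n4 + (293674)*n5 + (191030)*n6 + (57053)*n7 + (-65920)*n8 + (286760)*n9 + (-53765)*n10 + (226488)*n11 + (258078)*n12 + (-51496)*n13 + (87792)*n14 + (50552)*n15) * ((750958)*n1 + (139064)*n2 + (305946)*n3 + (-83656)*n4 + (293674)*n5 + (191030)*n6 + (57053)*n7 + (-65920)*n8 + (286760)*n9 + (-53765)*n10 + (226488)*n11 + (258078)*n12 + (-51496)*n13 + (87792)*n14 + (50552)*n15)) + (1/1264820160929) * (cnj ((13474204)*n2 + (-13877834)*n3 + (-5021680)*n4 + (-4387548)*n5 + (-897174)*n6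 + (3965880)*n7 + (-2310838)*n8 + (-9682550)*n9 + (1691251)*n10 + (-825030)*n11 + (2885768)*n12 + (-2787918)*n13 + (-5100404)*n14 + (-6475578)*n15) * ((13474204)*n2 + (-13877834)*n3 + (-5021680)*n4 + (-4387548)*n5 + (-897174)*n6 + (3965880)*n7 + (-2310838)*n8 + (-9682550)*n9 + (1691251)*n10 + (-825030)*n11 + (2885768)*n12 + (-2787918)*n13 + (-5100404)*n14 + (-6475578)*n15)) + (1/1295340533249686) * (cnj ((769078772)*n3 + (208140076)*n4 + (213583069)*n5 + (-101385088)*n6 + (-18665724)*n7 + (-110117271)*n8 + (153589547)*n9 + (-13081713)*n10 + (8092916)*n11 + (-25966443)*n12 + (79059026)*n13 + (350211448)*n14 + (325520582)*n15) * ((769078772)*n3 + (208140076)*n4 + (213583069)*n5 + (-101385088)*n6 + (-18665724)*n7 + (-110117271)*n8 + (153589547)*n9 + (-13081713)*n10 + (8092916)*n11 + (-25966443)*n12 + (79059026)*n13 + (350211448)*n14 + (325520582)*n15)) + (1/991444438122593070) * (cnj ((10313059980)*n4 + (-745296069)*n5 + (-174213760)*n6 + (-901789658)*n7 + (-3505397753)*n8 + (-6698599311)*n9 + (1751927893)*n10 + (827319712)*n11 + (-182443725)*n12 + (2558989362)*n13 + (-3050917308)*n14 + (443864746)*n15) * ((10313059980)*n4 + (-745296069)*n5 + (-174213760)*n6 + (-901789658)*n7 + (-3505397753)*n8 + (-6698599311)*n9 + (1751927893)*n10 + (827319712)*n11 + (-182443725)*n12 + (2558989362)*n13 + (-3050917308)*n14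 + (443864746)*n15)) + (1/37868129093521365995) * (cnj ((44062339403)*n5 + (-27108025020)*n6 + (-2329094069)*n7 + (3173056021)*n8 + (-76750151213)*n9 + (-11908557766)*n10 + (-24116784544)*n11 + (-25767304175)*n12 + (-1200886444)*n13 + (-43954360774)*n14 + (-37030545502)*n15) * ((44062339403)*n5 + (-27108025020)*n6 + (-2329094069)*n7 + (3173056021)*n8 + (-76750151213)*n9 + (-11908557766)*n10 + (-24116784544)*n11 + (-25767304175)*n12 + (-1200886444)*n13 + (-43954360774)*n14 + (-37030545502)*n15)) + (1/1137010580782697281994952) * (cnj ((8601529833928)*n6 + (2800315717385)*n7 + (3374969367224)*n8 + (9727643751438)*n9 + (4567654253306)*n10 + (4169111186990)*n11 + (7277875174476)*n12 + (1088884025436)*n13 + (-29256532680)*n14 + (1500425532620)*n15) * ((8601529833928)*n6 + (2800315717385)*n7 + (3374969367224)*n8 + (9727643751438)*n9 + (4567654253306)*n10 + (4169111186990)*n11 + (7277875174476)*n12 + (1088884025436)*n13 + (-29256532680)*n14 + (1500425532620)*n15)) + (1/2627988404219133193988866680) * (cnj ((305525697748935)*n7 + (131062048039352)*n8 + (226538106751178)*n9 + (331270424142042)*n10 + (109825520033178)*n11 + (227509888122172)*n12 + (-77136068921036)*n13 + (45242189918456)*n14 + (68634948783060)*n15) * ((305525697748935)*n7 + (131062048039352)*n8 + (226538106751178)*n9 + (331270424142042)*n10 + (109825520033178)*n11 + (227509888122172)*n12 + (-77136068921036)*n13 + (45242189918456)*n14 + (68634948783060)*n15)) + (1/5399328838602755995686774400620)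 * (cnj ((17672257614937652)*n8 + (33861165349167218)*n9 + (19097781432972717)*n10 + (5800116968765898)*n11 + (7707864501401332)*n12 + (7744559689318084)*n13 + (10756732027440596)*n14 + (13420624069214400)*n15) * ((17672257614937652)*n8 + (33861165349167218)*n9 + (19097781432972717)*n10 + (5800116968765898)*n11 + (7707864501401332)*n12 + (7744559689318084)*n13 + (10756732027440596)*n14 + (13420624069214400)*n15)) + (1/5063029034371921382828349248717044) * (cnj ((572991764231904994)*n9 + (-102039071552564269)*n10 + (135497233721734198)*n11 + (10746787102604328)*n12 + (-39286285492036556)*n13 + (94557865724959204)*n14 + (78787000801243360)*n15) * ((572991764231904994)*n9 + (-102039071552564269)*n10 + (135497233721734198)*n11 + (10746787102604328)*n12 + (-39286285492036556)*n13 + (94557865724959204)*n14 + (78787000801243360)*n15)) + (1/7671707028176414308674165601971735841) * (cnj ((26777721800104165553)*n10 + (-869373647345819804)*n11 + (1099020720407022374)*n12 + (7548132755828742830)*n13 + (679205224686730632)*n14 + (5693120514421988274)*n15) * ((26777721800104165553)*n10 + (-869373647345819804)*n11 + (1099020720407022374)*n12 + (7548132755828742830)*n13 + (679205224686730632)*n14 + (5693120514421988274)*n15)) + (4/6395175148801841518768958462338393684187) * (cnj ((238824467463731893579)*n11 + (46831232449756656746)*n12 + (-22199622124348136645)*n13 + (-41073030431170486238)*n14 + (-71250733404906742663)*n15) * ((238824467463731893579)*n11 + (46831232449756656746)*n12 + (-22199622124348136645)*n13 + (-41073030431170486238)*n14 + (-71250733404906742663)*n15)) + (4/1485611984479202127205320122508302083454383)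 * (cnj ((6220518359178623727277)*n12 + (260537238472559443101)*n13 + (1717314509456605286)*n14 + (-190348509281307781707)*n15) * ((6220518359178623727277)*n12 + (260537238472559443101)*n13 + (1717314509456605286)*n14 + (-190348509281307781707)*n15)) + (4/178355545745112063140028446266627897232442007) * (cnj ((28672135575637570337491)*n13 + (6462827961216697146213)*n14 + (27056737929210212387842)*n15) * ((28672135575637570337491)*n13 + (6462827961216697146213)*n14 + (27056737929210212387842)*n15)) + (4/535522019438604283158820191098355932086689941) * (cnj ((37354874946506045393902)*n14 + (58417686333848664024403)*n15) * ((37354874946506045393902)*n14 + (58417686333848664024403)*n15)) + (771222066172043361382484/18677437473253022696951) * (cnj (n15) * (n15))"
  unfolding QF4_def by (simp only: complex_cnj_add complex_cnj_mult complex_cnj_minus complex_cnj_numeral complex_cnj_one) algebra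

lemma psdr4:
  "QF4 (cnj n0) (cnj n1) (cnj n2) (cnj n3) (cnj n4) (cnj n5) (cnj n6) (cnj n7) (cnj n8) (cnj n9) (cnj n10) (cnj n11) (cnj n12) (cnj n13) (cnj n14) (cnj n15) n0 n1 n2 n3 n4 n5 n6 n7 n8 n9 n10 n11 n12 n13 n14 n15 = complex_of_real (rk4 n0 n1 n2 n3 n4 n5 n6 n7 n8 n9 n10 n11 n12 n13 n14 n15)"
  unfolding psd4 rk4_def cnj_self by simp

lemma lastzero4: "(1/1920) * a0 + (1/720919680) * a1 + (1/1264820160929) * a2 + (1/1295340533249686) * a3 + (1/991444438122593070) * a4 + (1/37868129093521365995) * a5 + (1/1137010580782697281994952) * a6 + (1/2627988404219133193988866680) * a7 + (1/5399328838602755995686774400620) * a8 + (1/5063029034371921382828349248717044) * a9 + (1/7671707028176414308674165601971735841) * a10 + (4/6395175148801841518768958462338393684187) * a11 + (4/1485611984479202127205320122508302083454383) * a12 + (4/178355545745112063140028446266627897232442007) * a13 + (4/535522019438604283158820191098355932086689941) * a14 + (771222066172043361382484/18677437473253022696951) * a15 = 0 \<Longrightarrow> 0 \<le> (a0::real) \<Longrightarrow> 0 \<le> (a1::real) \<Longrightarrow> 0 \<le> (a2::real) \<Longrightarrow> 0 \<le> (a3::real) \<Longrightarrow> 0 \<le> (a4::real) \<Longrightarrow> 0 \<le> (a5::real) \<Longrightarrow> 0 \<le> (a6::real) \<Longrightarrow> 0 \<le> (a7::real) \<Longrightarrow> 0 \<le> (a8::real) \<Longrightarrow> 0 \<le>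 (a9::real) \<Longrightarrow> 0 \<le> (a10::real) \<Longrightarrow> 0 \<le> (a11::real) \<Longrightarrow> 0 \<le> (a12::real) \<Longrightarrow> 0 \<le> (a13::real) \<Longrightarrow> 0 \<le> (a14::real) \<Longrightarrow> 0 \<le> (a15::real) \<Longrightarrow> a15 = 0"
  by linarith

lemma rk4_nonneg: "0 \<le> rk4 n0 n1 n2 n3 n4 n5 n6 n7 n8 n9 n10 n11 n12 n13 n14 n15"
  unfolding rk4_def by simp

lemma rk0_zero:
  assumes "rk0 n0 n1 n2 n3 n4 n5 n6 n7 n8 n9 n10 n11 n12 n13 n14 n15 = 0"
  shows "n15 = 0"
proof -
  have "(cmod (n15))^2 = 0"
    by (rule lastzero0[OF assms[unfolded rk0_def]]) simp_all
  then show ?thesis by simp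
qed

lemma sum5:
  fixes z1 z2 z3 z4 z5 X :: complex and r1 r2 r3 r4 r5 :: real
  assumes E: "X = (z1 - cnj z1) * complex_of_real r1 + (z2 - cnj z2) * complex_of_real r2
      + (z3 - cnj z3) * complex_of_real r3 + (z4 - cnj z4) * complex_of_real r4
      + (z5 - cnj z5) * complex_of_real r5"
    and X0: "X = 0"
    and p1: "0 \<le> r1" and p2: "0 \<le> r2" and p3: "0 \<le> r3" and p4: "0 \<le> r4" and p5: "0 \<le> r5"
    and h1: "Im z1 > 0" and h2: "Im z2 > 0" and h3: "Im z3 > 0" and h4: "Im z4 > 0" and h5: "Im z5 > 0"
  shows "r1 = 0"
proof -
  have "Im X = 2*Im z1*r1 + 2*Im z2*r2 + 2*Im z3*r3 + 2*Im z4*r4 + 2*Im z5*r5"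
    using E by (simp add: complex_diff_cnj)
  then have S: "Im z1*r1 + Im z2*r2 + Im z3*r3 + Im z4*r4 + Im z5*r5 = 0" using X0 by simp
  have "0 \<le> Im z2*r2" "0 \<le> Im z3*r3" "0 \<le> Im z4*r4" "0 \<le> Im z5*r5" "0 \<le> Im z1*r1"
    using p1 p2 p3 p4 p5 h1 h2 h3 h4 h5 by simp_all
  then have "Im z1 * r1 = 0" using S by linarith
  then show ?thesis using h1 by simp
qed

lemma G_ne0:
  fixes z1 z2 z3 z4 z5 :: complex
  assumes h1: "Im z1 > 0" and h2: "Im z2 > 0" and h3: "Im z3 > 0" and h4: "Im z4 > 0" and h5: "Im z5 > 0"
  shows "Gp z1 z2 z3 z4 z5 \<noteq> 0"
proof
  assume G0: "Gp z1 z2 z3 z4 z5 = 0"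
  have Gc: "Gp (cnj z1) (cnj z2) (cnj z3) (cnj z4) (cnj z5) = cnj (Gp z1 z2 z3 z4 z5)"
    by (simp add: Gp_def)
  have X0: "80*(Gp z1 z2 z3 z4 z5 * Hp (cnj z1) (cnj z2) (cnj z3) (cnj z4) (cnj z5) - Gp (cnj z1) (cnj z2) (cnj z3) (cnj z4) (cnj z5) * Hp z1 z2 z3 z4 z5) = 0"
    by (simp add: G0 Gc)
  note E = cert_main[of z1 z2 z3 z4 z5 "cnj z1" "cnj z2" "cnj z3" "cnj z4" "cnj z5", unfolded nu_cnj psdr0 psdr1 psdr2 psdr3 psdr4]
  note R = sum5[OF E X0 rk0_nonneg rk1_nonneg rk2_nonneg rk3_nonneg rk4_nonneg h1 h2 h3 h4 h5]
  have "nu0_15 z1 z2 z3 z4 z5 = 0" by (rule rk0_zero[OF R])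
  then have "z1*z2*z4 = 0" by (simp add: nu0_15_def)
  moreover have "z1 \<noteq> 0" "z2 \<noteq> 0" "z4 \<noteq> 0" using h1 h2 h4 by auto
  ultimately show False by simp
qed

section \<open>Reduction via Grace-Walsh-Szego\<close>

lemma Fs_ne0:
  fixes x1 x2 x3 x4 x5 x6 x7 x8 x9 x10 :: complex
  assumes h1: "Im x1 > 0" and h2: "Im x2 > 0" and h3: "Im x3 > 0" and h4: "Im x4 > 0"
    and h5: "Im x5 > 0" and h6: "Im x6 > 0" and h7: "Im x7 > 0" and h8: "Im x8 > 0"
    and h9: "Im x9 > 0" and h10: "Im x10 > 0"
  shows "Fs (x1+x2) (x3+x4) (x5+x6) (x7+x8) (x9+x10) (x1*x2) (x3*x4) (x5*x6) (x7*x8) (x9*x10) \<noteq> 0"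
proof
  assume H: "Fs (x1+x2) (x3+x4) (x5+x6) (x7+x8) (x9+x10) (x1*x2) (x3*x4) (x5*x6) (x7*x8) (x9*x10) = 0"
  have A1: "\<And>s q. Fs s (x3+x4) (x5+x6) (x7+x8) (x9+x10) q (x3*x4) (x5*x6) (x7*x8) (x9*x10) = Fs 0 (x3+x4) (x5+x6) (x7+x8) (x9+x10) 0 (x3*x4) (x5*x6) (x7*x8) (x9*x10) + s*(Fs 1 (x3+x4) (x5+x6) (x7+x8) (x9+x10) 0 (x3*x4) (x5*x6) (x7*x8) (x9*x10) - Fs 0 (x3+x4) (x5+x6) (x7+x8) (x9+x10) 0 (x3*x4) (x5*x6) (x7*x8) (x9*x10)) + q*(Fs 0 (x3+x4) (x5+x6) (x7+x8) (x9+x10) 1 (x3*x4) (x5*x6) (x7*x8) (x9*x10) - Fs 0 (x3+x4) (x5+x6) (x7+x8) (x9+x10) 0 (x3*x4) (x5*x6) (x7*x8) (x9*x10))"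
    unfolding Fs_def by algebra
  obtain z1 where z1: "Im z1 > 0" "Fs (2*z1) (x3+x4) (x5+x6) (x7+x8) (x9+x10) (z1*z1) (x3*x4) (x5*x6) (x7*x8) (x9*x10) = 0"
    using gwsF[where F="\<lambda>s q. Fs s (x3+x4) (x5+x6) (x7+x8) (x9+x10) q (x3*x4) (x5*x6) (x7*x8) (x9*x10)", OF A1 h1 h2 H] by blast
  have A2: "\<And>s q. Fs (2*z1) s (x5+x6) (x7+x8) (x9+x10) (z1*z1) q (x5*x6) (x7*x8) (x9*x10) = Fs (2*z1) 0 (x5+x6) (x7+x8) (x9+x10) (z1*z1) 0 (x5*x6) (x7*x8) (x9*x10) + s*(Fs (2*z1) 1 (x5+x6) (x7+x8) (x9+x10) (z1*z1) 0 (x5*x6) (x7*x8) (x9*x10) - Fs (2*z1) 0 (x5+x6) (x7+x8) (x9+x10) (z1*z1) 0 (x5*x6) (x7*x8) (x9*x10)) + q*(Fs (2*z1) 0 (x5+x6) (x7+x8) (x9+x10) (z1*z1) 1 (x5*x6) (x7*x8) (x9*x10) - Fs (2*z1) 0 (x5+x6) (x7+x8) (x9+x10) (z1*z1) 0 (x5*x6) (x7*x8) (x9*x10))"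
    unfolding Fs_def by algebra
  obtain z2 where z2: "Im z2 > 0" "Fs (2*z1) (2*z2) (x5+x6) (x7+x8) (x9+x10) (z1*z1) (z2*z2) (x5*x6) (x7*x8) (x9*x10) = 0"
    using gwsF[where F="\<lambda>s q. Fs (2*z1) s (x5+x6) (x7+x8) (x9+x10) (z1*z1) q (x5*x6) (x7*x8) (x9*x10)", OF A2 h3 h4 z1(2)] by blast
  have A3: "\<And>s q. Fs (2*z1) (2*z2) s (x7+x8) (x9+x10) (z1*z1) (z2*z2) q (x7*x8) (x9*x10) = Fs (2*z1) (2*z2) 0 (x7+x8) (x9+x10) (z1*z1) (z2*z2) 0 (x7*x8) (x9*x10) + s*(Fs (2*z1) (2*z2) 1 (x7+x8) (x9+x10) (z1*z1) (z2*z2) 0 (x7*x8) (x9*x10) - Fs (2*z1) (2*z2) 0 (x7+x8) (x9+x10) (z1*z1) (z2*z2) 0 (x7*x8) (x9*x10)) + q*(Fs (2*z1) (2*z2) 0 (x7+x8) (x9+x10) (z1*z1) (z2*z2) 1 (x7*x8) (x9*x10) - Fs (2*z1) (2*z2) 0 (x7+x8) (x9+x10) (z1*z1) (z2*z2) 0 (x7*x8) (x9*x10))"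
    unfolding Fs_def by algebra
  obtain z3 where z3: "Im z3 > 0" "Fs (2*z1) (2*z2) (2*z3) (x7+x8) (x9+x10) (z1*z1) (z2*z2) (z3*z3) (x7*x8) (x9*x10) = 0"
    using gwsF[where F="\<lambda>s q. Fs (2*z1) (2*z2) s (x7+x8) (x9+x10) (z1*z1) (z2*z2) q (x7*x8) (x9*x10)", OF A3 h5 h6 z2(2)] by blast
  have A4: "\<And>s q. Fs (2*z1) (2*z2) (2*z3) s (x9+x10) (z1*z1) (z2*z2) (z3*z3) q (x9*x10) = Fs (2*z1) (2*z2) (2*z3) 0 (x9+x10) (z1*z1) (z2*z2) (z3*z3) 0 (x9*x10) + s*(Fs (2*z1) (2*z2) (2*z3) 1 (x9+x10) (z1*z1) (z2*z2) (z3*z3) 0 (x9*x10) - Fs (2*z1) (2*z2) (2*z3) 0 (x9+x10) (z1*z1) (z2*z2) (z3*z3) 0 (x9*x10)) + q*(Fs (2*z1) (2*z2) (2*z3) 0 (x9+x10) (z1*z1) (z2*z2) (z3*z3) 1 (x9*x10) - Fs (2*z1) (2*z2) (2*z3) 0 (x9+x10) (z1*z1) (z2*z2) (z3*z3) 0 (x9*x10))"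
    unfolding Fs_def by algebra
  obtain z4 where z4: "Im z4 > 0" "Fs (2*z1) (2*z2) (2*z3) (2*z4) (x9+x10) (z1*z1) (z2*z2) (z3*z3) (z4*z4) (x9*x10) = 0"
    using gwsF[where F="\<lambda>s q. Fs (2*z1) (2*z2) (2*z3) s (x9+x10) (z1*z1) (z2*z2) (z3*z3) q (x9*x10)", OF A4 h7 h8 z3(2)] by blast
  have A5: "\<And>s q. Fs (2*z1) (2*z2) (2*z3) (2*z4) s (z1*z1) (z2*z2) (z3*z3) (z4*z4) q = Fs (2*z1) (2*z2) (2*z3) (2*z4) 0 (z1*z1) (z2*z2) (z3*z3) (z4*z4) 0 + s*(Fs (2*z1) (2*z2) (2*z3) (2*z4) 1 (z1*z1) (z2*z2) (z3*z3) (z4*z4) 0 - Fs (2*z1) (2*z2) (2*z3) (2*z4) 0 (z1*z1) (z2*z2) (z3*z3) (z4*z4) 0) + q*(Fs (2*z1) (2*z2) (2*z3) (2*z4) 0 (z1*z1) (z2*z2) (z3*z3) (z4*z4) 1 - Fs (2*z1) (2*z2) (2*z3) (2*z4) 0 (z1*z1) (z2*z2) (z3*z3) (z4*z4) 0)"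
    unfolding Fs_def by algebra
  obtain z5 where z5: "Im z5 > 0" "Fs (2*z1) (2*z2) (2*z3) (2*z4) (2*z5) (z1*z1) (z2*z2) (z3*z3) (z4*z4) (z5*z5) = 0"
    using gwsF[where F="\<lambda>s q. Fs (2*z1) (2*z2) (2*z3) (2*z4) s (z1*z1) (z2*z2) (z3*z3) (z4*z4) q", OF A5 h9 h10 z4(2)] by blast
  have "Gp z1 z2 z3 z4 z5 = 0" using z5(2) by (simp only: Fs_diag)
  then show False using G_ne0[OF z1(1) z2(1) z3(1) z4(1) z5(1)] by simp
qed


lemma f10_ne0:
  assumes "\<forall>i\<in>{1..10}. Im (x i) > 0"
  shows "f10 x \<noteq> 0"
proof -
  have "Im (x 1) > 0" "Im (x 2) > 0" "Im (x 3) > 0" "Im (x 4) > 0" "Im (x 5) > 0"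
       "Im (x 6) > 0" "Im (x 7) > 0" "Im (x 8) > 0" "Im (x 9) > 0" "Im (x 10) > 0"
    using assms by simp_all
  then show ?thesis unfolding f10_eq by (rule Fs_ne0)
qed

theorem lemma4p5:
  shows "half_plane_property 10 V10_bases \<and> stable 10 f10"
proof -
  have st: "stable 10 f10"
    unfolding stable_def
  proof (intro allI impI)
    fix v w :: "nat \<Rightarrow> real" and t :: complex
    assume pos: "\<forall>i\<in>{1..10}. v i > 0"
      and ft: "f10 (\<lambda>i. t * complex_of_real (v i) + complex_of_real (w i)) = 0"
    show "t \<in> \<real>"
    proof (rule ccontr)
      assume "t \<notin> \<real>"
      then have "Im t \<noteq> 0" by (simp add: complex_is_Real_iff)
      then consider "Im t > 0" | "Im t < 0" by linarith
      then show False
      proof cases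
        case 1
        have "\<forall>i\<in>{1..10}. Im (t * complex_of_real (v i) + complex_of_real (w i)) > 0"
          using pos 1 by simp
        then show False
          using f10_ne0[of "\<lambda>i. t * complex_of_real (v i) + complex_of_real (w i)"] ft by simp
      next
        case 2
        have "\<forall>i\<in>{1..10}. Im (cnj (t * complex_of_real (v i) + complex_of_real (w i))) > 0"
          using pos 2 by (simp add: mult_neg_pos)
        moreover have "f10 (\<lambda>i. cnj (t * complex_of_real (v i) + complex_of_real (w i))) = 0"
          using f10_cnj[of "\<lambda>i. t * complex_of_real (v i) + complex_of_real (w i)"] ft by simp
        ultimately show False
          using f10_ne0[of "\<lambda>i. cnj (t * complex_of_real (v i) + complex_of_real (w i))"] by simp
      qed
    qed
  qed
  then show ?thesis unfolding half_plane_property_def f10_def by simp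
qed

end
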